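(* Let $F$ be a field of characteristic $0$ and $k$ a positive integer. Then each of the following graded polynomials is a $\mathbb{Z}$-graded identity of $E^k$ (so the $T_{\mathbb{Z}}$-ideal $P^k$ they generate satisfies $P^k\subseteq T_{\mathbb{Z}}(E^k)$): (1) $x$ whenever $\alpha(x)<0$; (2) $[x_1,x_2,x_3]$ for every choice of the degrees; (3) if $k$ is even: $[y_1,y_2]\cdots[y_{k-1},y_k][y_{k+1},x]$ with $x$ of arbitrary degree; (4) if $k$ is odd: $[y_1,y_2]\cdots[y_{k-2},y_{k-1}][y_k,y_{k+1}]$; (5) for even $l\le k$: $g_{k-l+2}(z_1,\dots,z_{k-l+2})[u_1,u_2]\cdots[u_{l-1},u_l]$; (6) for odd $l\le k$: $[g_{k-l+2}(z_1,\dots,z_{k-l+2}),u_1][u_2,u_3]\cdots[u_{l-1},u_l]$; (7) for odd $l\le k$: $g_{k-l+2}(z_1,\dots,z_{k-l+2})[z_{k-l+3},u_1][u_2,u_3]\cdots[u_{l-1},u_l]$; where in (5)–(7) all $z_i$ have positive odd degree and all $u_i$ have even degree (each $u_i$ being either a degree-$0$ variable $y$ or a variable $z$ of positive even degree).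
   Context: $L$ is a vector space over $F$ with basis $e_1,e_2,\dots$, $E$ its unital Grassmann algebra (basis $1$ and $e_{i_1}\cdots e_{i_k}$, $i_1<\cdots<i_k$, with $e_ie_j=-e_je_i$). $E^k$ is $E$ with the $\mathbb{Z}$-grading induced by $\|e_i\|=0$ for $1\le i\le k$ and $\|e_i\|=1$ for $i\ge k+1$ (basis monomials get the sum of degrees of their factors; $1$ has degree $0$). Graded polynomials live in the free unital associative algebra on countably many variables of each integer degree, $\alpha(x)$ denoting the degree; the letters $y,y_i$ denote variables of degree $0$. A polynomial is a graded identity of a $\mathbb{Z}$-graded algebra $A$ if it vanishes under every substitution of each variable $x$ by an element of $A_{\alpha(x)}$. $[a,b]=ab-ba$, $[a,b,c]=[[a,b],c]$. Define $g_1(z_1)=z_1$ and, for $m\ge2$, $g_m(z_1,\dots,z_m)=\sum_T(-2)^{-|T|/2}f_T$, the sum over all subsets $T\subseteq\{1,\dots,m\}$ with $|T|$ even, where for $T=\{j_1<\cdots<j_t\}$ and $\{1,\dots,m\}\setminus T=\{i_1<\cdots<i_r\}$ one sets $f_T=z_{i_1}\cdots z_{i_r}[z_{j_1},z_{j_2}]\cdots[z_{j_{t-1}},z_{j_t}]$. *)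

theory Defs
  imports Main
begin

text \<open>Elements of the unital Grassmann algebra E over a field F on generators
  e_1, e_2, ... are represented by their coefficient functions: a monomial
  e_{i_1}...e_{i_k} (i_1 < ... < i_k) is the finite set {i_1,...,i_k} of
  positive naturals, the empty set being the unit 1.\<close>

type_synonym 'a grass = "nat set \<Rightarrow> 'a"

definition grass_carrier :: "'a::field grass set" where
  "grass_carrier = {a. finite {S. a S \<noteq> 0} \<and>
      (\<forall>S. a S \<noteq> 0 \<longrightarrow> finite S \<and> 0 \<notin> S)}"

definition gzero :: "'a::field grass" where
  "gzero = (\<lambda>S. 0)"

definition gone :: "'a::field grass" where
  "gone = (\<lambda>S. if S = {} then 1 else 0)"

definition gadd :: "'a::field grass \<Rightarrow> 'a grass \<Rightarrow> 'a grass" where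
  "gadd a b = (\<lambda>S. a S + b S)"

definition gsub :: "'a::field grass \<Rightarrow> 'a grass \<Rightarrow> 'a grass" where
  "gsub a b = (\<lambda>S. a S - b S)"

definition gscale :: "'a::field \<Rightarrow> 'a grass \<Rightarrow> 'a grass" where
  "gscale c a = (\<lambda>S. c * a S)"

text \<open>Sign of e_S e_T = sign * e_{S \<union> T} for disjoint S, T: number of inversions.\<close>
definition gsign :: "nat set \<Rightarrow> nat set \<Rightarrow> 'a::field" where
  "gsign S T = (-1) ^ card {(i, j). i \<in> S \<and> j \<in> T \<and> j < i}"

definition gmult :: "'a::field grass \<Rightarrow> 'a grass \<Rightarrow> 'a grass" where
  "gmult a b = (\<lambda>U. \<Sum>(S, T)\<in>{(S, T). a S \<noteq> 0 \<and> b T \<noteq> 0 \<and> S \<inter> T = {} \<and> S \<union> T = U}.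
                      gsign S T * a S * b T)"

definition gsum :: "('i \<Rightarrow> 'a::field grass) \<Rightarrow> 'i set \<Rightarrow> 'a grass" where
  "gsum f A = (\<lambda>U. \<Sum>i\<in>A. f i U)"

definition gcomm :: "'a::field grass \<Rightarrow> 'a grass \<Rightarrow> 'a grass" where
  "gcomm a b = gsub (gmult a b) (gmult b a)"

definition gprod :: "'a::field grass list \<Rightarrow> 'a grass" where
  "gprod xs = foldr gmult xs gone"

fun gcomm_prod :: "'a::field grass list \<Rightarrow> 'a grass" where
  "gcomm_prod [] = gone"
| "gcomm_prod [a] = a"
| "gcomm_prod (a # b # r) = gmult (gcomm a b) (gcomm_prod r)"

text \<open>The Z-grading of E^k: ||e_i|| = 0 for i \<le> k, 1 for i > k; E^k_n is the span of
  the monomials of degree n.\<close>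
definition Ek_comp :: "nat \<Rightarrow> int \<Rightarrow> 'a::field grass set" where
  "Ek_comp k n = {a \<in> grass_carrier. \<forall>S. a S \<noteq> 0 \<longrightarrow> int (card {i \<in> S. k < i}) = n}"

definition fT :: "nat \<Rightarrow> (nat \<Rightarrow> 'a::field grass) \<Rightarrow> nat set \<Rightarrow> 'a grass" where
  "fT m z T = gmult (gprod (map z (sorted_list_of_set ({1..m} - T))))
                    (gcomm_prod (map z (sorted_list_of_set T)))"

definition gpoly :: "nat \<Rightarrow> (nat \<Rightarrow> 'a::field grass) \<Rightarrow> 'a grass" where
  "gpoly m z = (if m = 1 then z 1 else
     gsum (\<lambda>T. gscale (inverse ((-2) ^ (card T div 2))) (fT m z T))
          {T. T \<subseteq> {1..m} \<and> even (card T)})"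

end

theory Submission
  imports Defs
begin

lemma gmult_supp:
  assumes "gmult a b U \<noteq> 0"
  obtains S T where "a S \<noteq> 0" "b T \<noteq> 0" "S \<inter> T = {}" "S \<union> T = U"
proof -
  from assms obtain p where "p \<in> {(S, T). a S \<noteq> 0 \<and> b T \<noteq> 0 \<and> S \<inter> T = {} \<and> S \<union> T = U}"
    unfolding gmult_def by (rule sum.not_neutral_contains_not_neutral)
  then show ?thesis using that by auto
qed

lemma carrierD:
  assumes "a \<in> grass_carrier" "a S \<noteq> 0" shows "finite S" "0 \<notin> S"
  using assms by (auto simp: grass_carrier_def)

lemma carrier_fin: "a \<in> grass_carrier \<Longrightarrow> finite {S. a S \<noteq> 0}"
  by (auto simp: grass_carrier_def)

lemma gmult_pow:
  assumes a: "a \<in> grass_carrier" and b: "b \<in> grass_carrier"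
  shows "gmult a b U = (\<Sum>S\<in>Pow U. gsign S (U - S) * a S * b (U - S))"
proof (cases "finite U")
  case True
  let ?B = "{S \<in> Pow U. a S \<noteq> 0 \<and> b (U - S) \<noteq> 0}"
  have eq: "{(S, T). a S \<noteq> 0 \<and> b T \<noteq> 0 \<and> S \<inter> T = {} \<and> S \<union> T = U} = (\<lambda>S. (S, U - S)) ` ?B"
  proof (rule set_eqI, rule iffI)
    fix p assume "p \<in> {(S, T). a S \<noteq> 0 \<and> b T \<noteq> 0 \<and> S \<inter> T = {} \<and> S \<union> T = U}"
    then obtain S T where p: "p = (S,T)" "a S \<noteq> 0" "b T \<noteq> 0" "S \<inter> T = {}" "S \<union> T = U" by auto
    then have "T = U - S" by auto
    with p show "p \<in> (\<lambda>S. (S, U - S)) ` ?B" by auto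
  qed auto
  have "gmult a b U = (\<Sum>S\<in>?B. gsign S (U - S) * a S * b (U - S))"
    unfolding gmult_def eq by (subst sum.reindex) (auto simp: inj_on_def)
  also have "\<dots> = (\<Sum>S\<in>Pow U. gsign S (U - S) * a S * b (U - S))"
    by (rule sum.mono_neutral_left) (use True in auto)
  finally show ?thesis .
next
  case False
  have E: "{(S, T). a S \<noteq> 0 \<and> b T \<noteq> 0 \<and> S \<inter> T = {} \<and> S \<union> T = U} = {}"
    using False carrierD(1)[OF a] carrierD(1)[OF b] by auto
  show ?thesis using False unfolding gmult_def E by simp
qed

lemma gsign_union_left:
  assumes "finite A" "finite B" "finite T" "A \<inter> B = {}"
  shows "gsign (A \<union> B) T = (gsign A T * gsign B T :: 'a::field)"
proof -
  have e: "{(i, j). i \<in> A \<union> B \<and> j \<in> T \<and> j < i} =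
    {(i, j). i \<in> A \<and> j \<in> T \<and> j < i} \<union> {(i, j). i \<in> B \<and> j \<in> T \<and> j < i}" by auto
  have f1: "finite {(i, j). i \<in> A \<and> j \<in> T \<and> j < i}"
    by (rule finite_subset[of _ "A \<times> T"]) (use assms in auto)
  have f2: "finite {(i, j). i \<in> B \<and> j \<in> T \<and> j < i}"
    by (rule finite_subset[of _ "B \<times> T"]) (use assms in auto)
  show ?thesis unfolding gsign_def e
    by (subst card_Un_disjoint[OF f1 f2]) (use assms in \<open>auto simp: power_add\<close>)
qed

lemma gsign_union_right:
  assumes "finite A" "finite B" "finite S" "A \<inter> B = {}"
  shows "gsign S (A \<union> B) = (gsign S A * gsign S B :: 'a::field)"
proof -
  have e: "{(i, j). i \<in> S \<and> j \<in> A \<union> B \<and> j < i} =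
    {(i, j). i \<in> S \<and> j \<in> A \<and> j < i} \<union> {(i, j). i \<in> S \<and> j \<in> B \<and> j < i}" by auto
  have f1: "finite {(i, j). i \<in> S \<and> j \<in> A \<and> j < i}"
    by (rule finite_subset[of _ "S \<times> A"]) (use assms in auto)
  have f2: "finite {(i, j). i \<in> S \<and> j \<in> B \<and> j < i}"
    by (rule finite_subset[of _ "S \<times> B"]) (use assms in auto)
  show ?thesis unfolding gsign_def e
    by (subst card_Un_disjoint[OF f1 f2]) (use assms in \<open>auto simp: power_add\<close>)
qed

lemma gsign_sq: "gsign S T * gsign S T = (1::'a::field)"
proof -
  have "((-1::'a) ^ n) * (-1) ^ n = 1" for n :: nat
    by (simp flip: power_add)
  then show ?thesis by (simp add: gsign_def)
qed
lemma gsign_empty[simp]: "gsign {} T = 1" "gsign S {} = 1"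
  by (simp_all add: gsign_def)
lemma gsign_swap:
  assumes "finite S" "finite T" "S \<inter> T = {}"
  shows "gsign S T * gsign T S = ((-1) ^ (card S * card T) :: 'a::field)"
proof -
  let ?X = "{(i, j). i \<in> S \<and> j \<in> T \<and> j < i}"
  let ?Y = "{(i, j). i \<in> S \<and> j \<in> T \<and> i < j}"
  have "{(i, j). i \<in> T \<and> j \<in> S \<and> j < i} = (\<lambda>(i,j). (j,i)) ` ?Y" by auto
  then have cY: "card {(i, j). i \<in> T \<and> j \<in> S \<and> j < i} = card ?Y"
    by (simp add: card_image inj_on_def)
  have fX: "finite ?X" by (rule finite_subset[of _ "S \<times> T"]) (use assms in auto)
  have fY: "finite ?Y" by (rule finite_subset[of _ "S \<times> T"]) (use assms in auto)
  have U: "?X \<union> ?Y = S \<times> T"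
  proof
    show "S \<times> T \<subseteq> ?X \<union> ?Y"
    proof
      fix p assume "p \<in> S \<times> T"
      then obtain i j where p: "p = (i,j)" "i \<in> S" "j \<in> T" by auto
      then have "i \<noteq> j" using assms(3) by auto
      then show "p \<in> ?X \<union> ?Y" using p by (cases "i < j") auto
    qed
  qed auto
  have D: "?X \<inter> ?Y = {}" by auto
  have "card ?X + card ?Y = card S * card T"
    using card_Un_disjoint[OF fX fY D] U by (simp add: card_cartesian_product)
  then show ?thesis unfolding gsign_def cY by (simp flip: power_add)
qed

lemma carrierI:
  assumes "finite {S. a S \<noteq> 0}" "\<And>S. a S \<noteq> 0 \<Longrightarrow> finite S \<and> 0 \<notin> S"
  shows "a \<in> grass_carrier"
  using assms unfolding grass_carrier_def by blast

lemma gzero_carrier[simp]: "gzero \<in> grass_carrier"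
  by (simp add: grass_carrier_def gzero_def)

lemma gone_carrier[simp]: "gone \<in> grass_carrier"
proof (rule carrierI)
  have "{S. gone S \<noteq> (0::'a)} = {{}}" by (auto simp: gone_def)
  then show "finite {S. gone S \<noteq> (0::'a)}" by simp
  fix S assume "gone S \<noteq> (0::'a)"
  then have "S = {}" by (simp add: gone_def split: if_splits)
  then show "finite S \<and> 0 \<notin> S" by simp
qed

lemma carrier_pointwise:
  assumes "a \<in> grass_carrier" "b \<in> grass_carrier" "\<And>S. a S = 0 \<Longrightarrow> b S = 0 \<Longrightarrow> c S = 0"
  shows "c \<in> grass_carrier"
proof (rule carrierI)
  show "finite {S. c S \<noteq> 0}"
  proof (rule finite_subset[of _ "{S. a S \<noteq> 0} \<union> {S. b S \<noteq> 0}"])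
    show "{S. c S \<noteq> 0} \<subseteq> {S. a S \<noteq> 0} \<union> {S. b S \<noteq> 0}" using assms(3) by blast
    show "finite ({S. a S \<noteq> 0} \<union> {S. b S \<noteq> 0})"
      using carrier_fin[OF assms(1)] carrier_fin[OF assms(2)] by simp
  qed
  fix S assume "c S \<noteq> 0"
  then have "a S \<noteq> 0 \<or> b S \<noteq> 0" using assms(3) by blast
  then show "finite S \<and> 0 \<notin> S"
  proof
    assume "a S \<noteq> 0" then show ?thesis using carrierD[OF assms(1)] by simp
  next
    assume "b S \<noteq> 0" then show ?thesis using carrierD[OF assms(2)] by simp
  qed
qed

lemma gadd_carrier[simp]: "a \<in> grass_carrier \<Longrightarrow> b \<in> grass_carrier \<Longrightarrow> gadd a b \<in> grass_carrier"
  by (rule carrier_pointwise[of a b]) (simp_all add: gadd_def)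

lemma gsub_carrier[simp]: "a \<in> grass_carrier \<Longrightarrow> b \<in> grass_carrier \<Longrightarrow> gsub a b \<in> grass_carrier"
  by (rule carrier_pointwise[of a b]) (simp_all add: gsub_def)

lemma gscale_carrier[simp]: "a \<in> grass_carrier \<Longrightarrow> gscale c a \<in> grass_carrier"
  by (rule carrier_pointwise[of a a]) (simp_all add: gscale_def)

lemma gmult_carrier[simp]:
  assumes a: "a \<in> grass_carrier" and b: "b \<in> grass_carrier"
  shows "gmult a b \<in> grass_carrier"
proof (rule carrierI)
  have "{U. gmult a b U \<noteq> 0} \<subseteq> (\<lambda>(S,T). S \<union> T) ` ({S. a S \<noteq> 0} \<times> {T. b T \<noteq> 0})"
  proof
    fix U assume "U \<in> {U. gmult a b U \<noteq> 0}"
    then have h: "gmult a b U \<noteq> 0" by simp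
    obtain S T where "a S \<noteq> 0" "b T \<noteq> 0" "S \<union> T = U"
      using gmult_supp[OF h] by blast
    then show "U \<in> (\<lambda>(S,T). S \<union> T) ` ({S. a S \<noteq> 0} \<times> {T. b T \<noteq> 0})" by blast
  qed
  moreover have "finite ((\<lambda>(S,T). S \<union> T) ` ({S. a S \<noteq> 0} \<times> {T. b T \<noteq> 0}))"
    using carrier_fin[OF a] carrier_fin[OF b] by simp
  ultimately show "finite {U. gmult a b U \<noteq> 0}" by (rule finite_subset)
next
  fix U assume h: "gmult a b U \<noteq> 0"
  obtain S T where "a S \<noteq> 0" "b T \<noteq> 0" "S \<union> T = U"
    using gmult_supp[OF h] by blast
  then show "finite U \<and> 0 \<notin> U"
    using carrierD[OF a \<open>a S \<noteq> 0\<close>] carrierD[OF b \<open>b T \<noteq> 0\<close>] by auto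
qed

lemma carrier_infinite: "a \<in> grass_carrier \<Longrightarrow> infinite U \<Longrightarrow> a U = 0"
  using carrierD(1) by blast

lemma gsign_comm:
  assumes "finite S" "finite T" "S \<inter> T = {}"
  shows "gsign T S = ((-1) ^ (card S * card T) * gsign S T :: 'a::field)"
proof -
  have "gsign T S = (gsign S T * gsign S T) * (gsign T S :: 'a)" by (simp add: gsign_sq)
  also have "\<dots> = gsign S T * (gsign S T * gsign T S)" by (simp add: mult.assoc)
  also have "\<dots> = gsign S T * (-1) ^ (card S * card T)" by (subst gsign_swap[OF assms]) (rule refl)
  finally show ?thesis by (simp add: mult.commute)
qed

lemma diff_diff_sub[simp]: "S \<subseteq> U \<Longrightarrow> U - (U - S) = S" by auto

lemma gmult_pow_swap:
  assumes a: "a \<in> grass_carrier" and b: "b \<in> grass_carrier" and U: "finite U"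
  shows "gmult b a U = (\<Sum>S\<in>Pow U. gsign (U - S) S * a S * b (U - S))"
proof -
  have "gmult b a U = (\<Sum>S\<in>Pow U. gsign S (U - S) * b S * a (U - S))"
    by (rule gmult_pow[OF b a])
  also have "\<dots> = (\<Sum>S\<in>Pow U. gsign (U - S) (U - (U - S)) * b (U - S) * a (U - (U - S)))"
    by (rule sum.reindex_bij_witness[where i="\<lambda>S. U - S" and j="\<lambda>S. U - S"]) auto
  also have "\<dots> = (\<Sum>S\<in>Pow U. gsign (U - S) S * a S * b (U - S))"
    by (rule sum.cong) (auto simp: Diff_Diff_Int Int_absorb1 mult_ac)
  finally show ?thesis .
qed

lemma gmult_assoc:
  assumes a: "a \<in> grass_carrier" and b: "b \<in> grass_carrier" and c: "c \<in> grass_carrier"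
  shows "gmult (gmult a b) c = gmult a (gmult b c)"
proof
  fix U
  show "gmult (gmult a b) c U = gmult a (gmult b c) U"
  proof (cases "finite U")
    case False
    then show ?thesis using a b c by (simp add: carrier_infinite)
  next
    case True
    have "gmult (gmult a b) c U =
      (\<Sum>V\<in>Pow U. \<Sum>P\<in>Pow V. gsign V (U - V) * gsign P (V - P) * a P * b (V - P) * c (U - V))"
      by (simp add: gmult_pow a b c sum_distrib_left sum_distrib_right mult_ac)
    also have "\<dots> = (\<Sum>(V,P)\<in>Sigma (Pow U) Pow.
        gsign V (U - V) * gsign P (V - P) * a P * b (V - P) * c (U - V))"
      by (rule sum.Sigma) (auto simp: True intro: finite_subset[OF _ True])
    also have "\<dots> = (\<Sum>(P,Q)\<in>Sigma (Pow U) (\<lambda>P. Pow (U - P)).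
        gsign P (U - P) * gsign Q (U - P - Q) * a P * b Q * c (U - P - Q))"
    proof (rule sum.reindex_bij_witness[where i="\<lambda>(P,Q). (P \<union> Q, P)" and j="\<lambda>(V,P). (P, V - P)"])
      fix x assume "x \<in> Sigma (Pow U) Pow"
      then obtain V P where x: "x = (V,P)" "V \<subseteq> U" "P \<subseteq> V" by auto
      have fin: "finite P" "finite (V - P)" "finite (U - V)"
        using x True by (auto intro: finite_subset)
      have e1: "V = P \<union> (V - P)" "U - P = (V - P) \<union> (U - V)" "U - P - (V - P) = U - V"
        using x by auto
      have s1: "gsign (P \<union> (V - P)) (U - V) = (gsign P (U - V) * gsign (V - P) (U - V) :: 'a)"
        by (rule gsign_union_left) (use fin in auto)
      have s2: "gsign P ((V - P) \<union> (U - V)) = (gsign P (V - P) * gsign P (U - V) :: 'a)"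
        by (rule gsign_union_right) (use fin in auto)
      have e2: "P \<union> (V - P) = V" "(V - P) \<union> (U - V) = U - P" using x by auto
      have "gsign V (U - V) * gsign P (V - P) = (gsign P (U - P) * gsign (V - P) (U - P - (V - P)) :: 'a)"
        using s1 s2 unfolding e2 e1(3) by (simp add: mult_ac)
      then show "(case (case x of (V, P) \<Rightarrow> (P, V - P)) of
          (P, Q) \<Rightarrow> gsign P (U - P) * gsign Q (U - P - Q) * a P * b Q * c (U - P - Q)) =
        (case x of (V, P) \<Rightarrow> gsign V (U - V) * gsign P (V - P) * a P * b (V - P) * c (U - V))"
        using x e1 by (simp add: mult_ac)
    qed auto
    also have "\<dots> = (\<Sum>P\<in>Pow U. \<Sum>Q\<in>Pow (U - P).
        gsign P (U - P) * gsign Q (U - P - Q) * a P * b Q * c (U - P - Q))"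
      by (rule sum.Sigma[symmetric]) (auto simp: True intro: finite_subset[OF _ True])
    also have "\<dots> = gmult a (gmult b c) U"
      by (simp add: gmult_pow a b c sum_distrib_left sum_distrib_right mult_ac)
    finally show ?thesis .
  qed
qed

lemma gmult_one_left:
  assumes a: "a \<in> grass_carrier" shows "gmult gone a = a"
proof
  fix U show "gmult gone a U = a U"
  proof (cases "finite U")
    case False then show ?thesis using a by (simp add: carrier_infinite)
  next
    case True
    have "gmult gone a U = (\<Sum>S\<in>Pow U. if S = {} then a (U - S) else 0)"
      unfolding gmult_pow[OF gone_carrier a] by (rule sum.cong) (auto simp: gone_def)
    also have "\<dots> = a U" by (subst sum.delta) (use True in auto)
    finally show ?thesis .
  qed
qed

lemma gmult_one_right:
  assumes a: "a \<in> grass_carrier" shows "gmult a gone = a"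
proof
  fix U show "gmult a gone U = a U"
  proof (cases "finite U")
    case False then show ?thesis using a by (simp add: carrier_infinite)
  next
    case True
    have "gmult a gone U = (\<Sum>S\<in>Pow U. if S = U then a S else 0)"
      unfolding gmult_pow[OF a gone_carrier]
    proof (rule sum.cong)
      fix S assume "S \<in> Pow U"
      then have "(U - S = {}) = (S = U)" by auto
      then show "gsign S (U - S) * a S * gone (U - S) = (if S = U then a S else 0)"
        by (auto simp: gone_def)
    qed simp
    also have "\<dots> = a U" by (subst sum.delta) (use True in auto)
    finally show ?thesis .
  qed
qed

lemma gmult_gadd_right:
  assumes "a \<in> grass_carrier" "b \<in> grass_carrier" "c \<in> grass_carrier"
  shows "gmult a (gadd b c) = gadd (gmult a b) (gmult a c)"
  apply (rule ext)
  apply (subst gmult_pow[OF assms(1) gadd_carrier[OF assms(2,3)]])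
  apply (simp add: gadd_def gmult_pow assms sum.distrib distrib_left)
  done

lemma gmult_gadd_left:
  assumes "a \<in> grass_carrier" "b \<in> grass_carrier" "c \<in> grass_carrier"
  shows "gmult (gadd a b) c = gadd (gmult a c) (gmult b c)"
  apply (rule ext)
  apply (subst gmult_pow[OF gadd_carrier[OF assms(1,2)] assms(3)])
  apply (simp add: gadd_def gmult_pow assms sum.distrib distrib_left distrib_right)
  done

lemma gmult_gscale_left:
  assumes "a \<in> grass_carrier" "b \<in> grass_carrier"
  shows "gmult (gscale c a) b = gscale c (gmult a b)"
  apply (rule ext)
  apply (subst gmult_pow[OF gscale_carrier[OF assms(1)] assms(2)])
  apply (simp add: gscale_def gmult_pow assms sum_distrib_left mult_ac)
  done

lemma gmult_gscale_right:
  assumes "a \<in> grass_carrier" "b \<in> grass_carrier"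
  shows "gmult a (gscale c b) = gscale c (gmult a b)"
  apply (rule ext)
  apply (subst gmult_pow[OF assms(1) gscale_carrier[OF assms(2)]])
  apply (simp add: gscale_def gmult_pow assms sum_distrib_left mult_ac)
  done

typedef (overloaded) 'a G = "grass_carrier :: 'a::field grass set" morphisms R A
  by (rule exI[of _ gzero]) simp

lemmas R_car[simp] = R
lemmas A_inv[simp] = A_inverse[simplified]
lemmas R_inv[simp] = R_inverse

lemma R_eqI: "R x = R y \<Longrightarrow> x = y"
  by (simp add: R_inject)

instantiation G :: (field) ring_1
begin
definition zero_G_def: "0 = A gzero"
definition one_G_def: "1 = A gone"
definition plus_G_def: "x + y = A (gadd (R x) (R y))"
definition minus_G_def: "x - y = A (gsub (R x) (R y))"
definition uminus_G_def: "- x = A (gscale (-1) (R x))"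
definition times_G_def: "x * y = A (gmult (R x) (R y))"

lemma R_zero[simp]: "R 0 = gzero" by (simp add: zero_G_def)
lemma R_one[simp]: "R 1 = gone" by (simp add: one_G_def)
lemma R_plus[simp]: "R (x + y) = gadd (R x) (R y)" by (simp add: plus_G_def)
lemma R_minus[simp]: "R (x - y) = gsub (R x) (R y)" by (simp add: minus_G_def)
lemma R_uminus[simp]: "R (- x) = gscale (-1) (R x)" by (simp add: uminus_G_def)
lemma R_times[simp]: "R (x * y) = gmult (R x) (R y)" by (simp add: times_G_def)

instance
proof
  fix a b c :: "'a G"
  show "a * b * c = a * (b * c)" by (rule R_eqI) (simp add: gmult_assoc)
  show "1 * a = a" by (rule R_eqI) (simp add: gmult_one_left)
  show "a * 1 = a" by (rule R_eqI) (simp add: gmult_one_right)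
  show "(a + b) * c = a * c + b * c" by (rule R_eqI) (simp add: gmult_gadd_left)
  show "a * (b + c) = a * b + a * c" by (rule R_eqI) (simp add: gmult_gadd_right)
  show "a + b + c = a + (b + c)" by (rule R_eqI) (simp add: gadd_def add.assoc)
  show "a + b = b + a" by (rule R_eqI) (simp add: gadd_def add.commute)
  show "0 + a = a" by (rule R_eqI) (simp add: gadd_def gzero_def)
  show "- a + a = 0" by (rule R_eqI) (simp add: gadd_def gzero_def gscale_def)
  show "a - b = a + - b" by (rule R_eqI) (simp add: gadd_def gsub_def gscale_def)
  show "(0::'a G) \<noteq> 1"
  proof
    assume "(0::'a G) = 1"
    then have "R (0::'a G) {} = R (1::'a G) {}" by simp
    then show False by (simp add: gzero_def gone_def)
  qed
qed
end

definition scl :: "'a::field \<Rightarrow> 'a G \<Rightarrow> 'a G" where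
  "scl c x = A (gscale c (R x))"

lemma R_scl[simp]: "R (scl c x) = gscale c (R x)" by (simp add: scl_def)

definition sc :: "'a::field \<Rightarrow> 'a G" where "sc c = scl c 1"

lemma scl_sc: "scl c x = sc c * x"
  by (rule R_eqI) (simp add: sc_def gmult_gscale_left gmult_one_left)

lemma sc_comm: "sc c * x = x * sc c"
  by (rule R_eqI) (simp add: sc_def gmult_gscale_left gmult_gscale_right gmult_one_left gmult_one_right)

lemma sc_mult: "sc (c * d) = sc c * sc d"
  apply (rule R_eqI)
  apply (simp add: sc_def gmult_gscale_left gmult_one_left)
  apply (simp add: gscale_def mult_ac)
  done

lemma sc_add: "sc (c + d) = sc c + sc d"
  by (rule R_eqI) (simp add: sc_def gadd_def gscale_def distrib_right)

lemma sc_uminus: "sc (- c) = - sc c"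
  by (rule R_eqI) (simp add: sc_def gscale_def)

lemma sc_one: "sc 1 = 1"
  by (rule R_eqI) (simp add: sc_def gscale_def)

lemma sc_two: "sc 2 = 2"
proof -
  have "sc (1 + 1) = sc 1 + sc 1" by (rule sc_add)
  then show ?thesis by (simp only: sc_one one_add_one)
qed

lemma R_mult_supp:
  assumes "R (x * y) U \<noteq> 0"
  obtains S T where "R x S \<noteq> 0" "R y T \<noteq> 0" "S \<inter> T = {}" "S \<union> T = U"
proof -
  have h: "gmult (R x) (R y) U \<noteq> 0" using assms by simp
  show thesis using gmult_supp[OF h] that by blast
qed

lemma R_fin: "R x S \<noteq> 0 \<Longrightarrow> finite S"
  using carrierD(1)[OF R_car] by blast

lemma R_nz: "R x S \<noteq> 0 \<Longrightarrow> 0 \<notin> S"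
  using carrierD(2)[OF R_car] by blast

definition ev :: "'a::field G \<Rightarrow> bool" where
  "ev x \<longleftrightarrow> (\<forall>S. R x S \<noteq> 0 \<longrightarrow> even (card S))"
definition od :: "'a::field G \<Rightarrow> bool" where
  "od x \<longleftrightarrow> (\<forall>S. R x S \<noteq> 0 \<longrightarrow> odd (card S))"
definition evp :: "'a::field G \<Rightarrow> 'a G" where
  "evp x = A (\<lambda>S. if even (card S) then R x S else 0)"
definition odp :: "'a::field G \<Rightarrow> 'a G" where
  "odp x = A (\<lambda>S. if odd (card S) then R x S else 0)"

lemma R_evp: "R (evp x) = (\<lambda>S. if even (card S) then R x S else 0)"
  unfolding evp_def by (rule A_inv, rule carrier_pointwise[of "R x" "R x"]) auto

lemma R_odp: "R (odp x) = (\<lambda>S. if odd (card S) then R x S else 0)"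
  unfolding odp_def by (rule A_inv, rule carrier_pointwise[of "R x" "R x"]) auto

lemma evp_odp: "evp x + odp x = x"
  by (rule R_eqI, rule ext) (simp add: R_evp R_odp gadd_def)

lemma ev_evp: "ev (evp x)" by (simp add: ev_def R_evp)
lemma od_odp: "od (odp x)" by (simp add: od_def R_odp)

lemma ev_central:
  assumes "ev x" shows "x * y = y * x"
proof (rule R_eqI, rule ext)
  fix U
  show "R (x * y) U = R (y * x) U"
  proof (cases "finite U")
    case False then show ?thesis by (simp add: carrier_infinite)
  next
    case True
    have "R (x * y) U = (\<Sum>S\<in>Pow U. gsign S (U - S) * R x S * R y (U - S))"
      by (simp add: gmult_pow)
    also have "\<dots> = (\<Sum>S\<in>Pow U. gsign (U - S) S * R x S * R y (U - S))"
    proof (rule sum.cong)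
      fix S assume S: "S \<in> Pow U"
      show "gsign S (U - S) * R x S * R y (U - S) = gsign (U - S) S * R x S * R y (U - S)"
      proof (cases "R x S = 0")
        case False
        then have "even (card S)" using assms by (simp add: ev_def)
        moreover have "gsign (U - S) S = (-1) ^ (card S * card (U - S)) * (gsign S (U - S) :: 'a)"
          by (rule gsign_comm) (use S in \<open>auto intro: finite_subset[OF _ True]\<close>)
        ultimately show ?thesis by simp
      qed simp
    qed simp
    also have "\<dots> = R (y * x) U"
      by (simp add: gmult_pow_swap True)
    finally show ?thesis .
  qed
qed

lemma od_anti:
  assumes "od x" "od y" shows "x * y = - (y * x)"
proof (rule R_eqI, rule ext)
  fix U
  show "R (x * y) U = R (- (y * x)) U"
  proof (cases "finite U")
    case False then show ?thesis by (simp add: carrier_infinite gscale_def)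
  next
    case True
    have "R (x * y) U = (\<Sum>S\<in>Pow U. gsign S (U - S) * R x S * R y (U - S))"
      by (simp add: gmult_pow)
    also have "\<dots> = (\<Sum>S\<in>Pow U. - (gsign (U - S) S * R x S * R y (U - S)))"
    proof (rule sum.cong)
      fix S assume S: "S \<in> Pow U"
      show "gsign S (U - S) * R x S * R y (U - S) = - (gsign (U - S) S * R x S * R y (U - S))"
      proof (cases "R x S = 0 \<or> R y (U - S) = 0")
        case False
        then have "odd (card S)" "odd (card (U - S))" using assms by (auto simp: od_def)
        then have o: "odd (card S * card (U - S))" by simp
        have "gsign (U - S) S = (-1) ^ (card S * card (U - S)) * (gsign S (U - S) :: 'a)"
          by (rule gsign_comm) (use S in \<open>auto intro: finite_subset[OF _ True]\<close>)
        then show ?thesis using o by simp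
      qed auto
    qed simp
    also have "\<dots> = - R (y * x) U"
      by (simp add: gmult_pow_swap True sum_negf)
    finally show ?thesis by (simp add: gscale_def)
  qed
qed

lemma ev_mult: "ev x \<Longrightarrow> ev y \<Longrightarrow> ev (x * y)"
  unfolding ev_def
proof (intro allI impI)
  fix U assume ex: "\<forall>S. R x S \<noteq> 0 \<longrightarrow> even (card S)" and ey: "\<forall>S. R y S \<noteq> 0 \<longrightarrow> even (card S)"
    and h: "R (x * y) U \<noteq> 0"
  obtain S T where st: "R x S \<noteq> 0" "R y T \<noteq> 0" "S \<inter> T = {}" "S \<union> T = U"
    using R_mult_supp[OF h] by blast
  have "card U = card S + card T" using st card_Un_disjoint[OF R_fin[OF st(1)] R_fin[OF st(2)] st(3)] by simp
  then show "even (card U)" using st ex ey by simp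
qed

lemma od_mult: "od x \<Longrightarrow> od y \<Longrightarrow> ev (x * y)"
  unfolding ev_def od_def
proof (intro allI impI)
  fix U assume ex: "\<forall>S. R x S \<noteq> 0 \<longrightarrow> odd (card S)" and ey: "\<forall>S. R y S \<noteq> 0 \<longrightarrow> odd (card S)"
    and h: "R (x * y) U \<noteq> 0"
  obtain S T where st: "R x S \<noteq> 0" "R y T \<noteq> 0" "S \<inter> T = {}" "S \<union> T = U"
    using R_mult_supp[OF h] by blast
  have "card U = card S + card T" using st card_Un_disjoint[OF R_fin[OF st(1)] R_fin[OF st(2)] st(3)] by simp
  then show "even (card U)" using st ex ey by simp
qed

lemma ev_diff: assumes "ev x" "ev y" shows "ev (x - y)"
  unfolding ev_def
proof (intro allI impI)
  fix S assume h: "R (x - y) S \<noteq> 0"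
  then have "R x S \<noteq> 0 \<or> R y S \<noteq> 0" by (auto simp: gsub_def)
  then show "even (card S)" using assms unfolding ev_def by blast
qed

definition cen :: "'a::field G \<Rightarrow> bool" where "cen x \<longleftrightarrow> (\<forall>y. x * y = y * x)"

lemma ev_cen: "ev x \<Longrightarrow> cen x" by (simp add: cen_def ev_central)

lemma cen_mult: "cen x \<Longrightarrow> cen y \<Longrightarrow> cen (x * y)"
  unfolding cen_def by (metis mult.assoc)

lemma cen_one: "cen 1" by (simp add: cen_def)

lemma comm_odp: "x * y - y * x = odp x * odp y - odp y * odp x"
proof -
  have cx: "cen (evp x)" and cy: "cen (evp y)" by (simp_all add: ev_cen ev_evp)
  have e1: "evp x * evp y = evp y * evp x" "evp x * odp y = odp y * evp x"
     "evp y * odp x = odp x * evp y"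
    using cx cy unfolding cen_def by blast+
  have "x * y - y * x = (evp x + odp x) * (evp y + odp y) - (evp y + odp y) * (evp x + odp x)"
    by (simp add: evp_odp)
  also have "\<dots> = odp x * odp y - odp y * odp x"
    by (simp add: distrib_left distrib_right e1)
  finally show ?thesis .
qed

lemma comm_cen: "cen (x * y - y * x)"
  by (subst comm_odp) (intro ev_cen ev_diff od_mult od_odp)

definition Id :: "nat \<Rightarrow> nat \<Rightarrow> 'a::field G set" where
  "Id k r = {x. \<forall>S. R x S \<noteq> 0 \<longrightarrow> r \<le> card (S \<inter> {1..k})}"

lemma Id_mult:
  assumes "x \<in> Id k r" "y \<in> Id k s" shows "x * y \<in> Id k (r + s)"
  unfolding Id_def
proof (intro CollectI allI impI)
  fix U assume h: "R (x * y) U \<noteq> 0"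
  obtain S T where st: "R x S \<noteq> 0" "R y T \<noteq> 0" "S \<inter> T = {}" "S \<union> T = U"
    using R_mult_supp[OF h] by blast
  have "U \<inter> {1..k} = (S \<inter> {1..k}) \<union> (T \<inter> {1..k})" using st by auto
  moreover have "(S \<inter> {1..k}) \<inter> (T \<inter> {1..k}) = {}" using st by auto
  ultimately have "card (U \<inter> {1..k}) = card (S \<inter> {1..k}) + card (T \<inter> {1..k})"
    by (simp add: card_Un_disjoint)
  moreover have "r \<le> card (S \<inter> {1..k})" "s \<le> card (T \<inter> {1..k})"
    using assms st unfolding Id_def by auto
  ultimately show "r + s \<le> card (U \<inter> {1..k})" by simp
qed

lemma Id_0[simp]: "x \<in> Id k 0" by (simp add: Id_def)

lemma Id_mono: "x \<in> Id k s \<Longrightarrow> r \<le> s \<Longrightarrow> x \<in> Id k r"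
  unfolding Id_def by auto

lemma Id_zero[simp]: "0 \<in> Id k r" by (simp add: Id_def gzero_def)

lemma Id_pointwise:
  assumes "x \<in> Id k r" "y \<in> Id k r" "\<And>S. R x S = 0 \<Longrightarrow> R y S = 0 \<Longrightarrow> R z S = 0"
  shows "z \<in> Id k r"
  unfolding Id_def
proof (intro CollectI allI impI)
  fix S assume "R z S \<noteq> 0"
  then have "R x S \<noteq> 0 \<or> R y S \<noteq> 0" using assms(3) by blast
  then show "r \<le> card (S \<inter> {1..k})" using assms(1,2) unfolding Id_def by blast
qed

lemma Id_add: "x \<in> Id k r \<Longrightarrow> y \<in> Id k r \<Longrightarrow> x + y \<in> Id k r"
  by (rule Id_pointwise[of x k r y]) (simp_all add: gadd_def)

lemma Id_diff: "x \<in> Id k r \<Longrightarrow> y \<in> Id k r \<Longrightarrow> x - y \<in> Id k r"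
  by (rule Id_pointwise[of x k r y]) (simp_all add: gsub_def)

lemma Id_uminus: "x \<in> Id k r \<Longrightarrow> - x \<in> Id k r"
  by (rule Id_pointwise[of x k r x]) (simp_all add: gscale_def)

lemma Id_sum: "(\<And>i. i \<in> F \<Longrightarrow> f i \<in> Id k r) \<Longrightarrow> sum f F \<in> Id k r"
  by (induction F rule: infinite_finite_induct) (auto intro: Id_add)

lemma Id_sc: "x \<in> Id k r \<Longrightarrow> sc c * x \<in> Id k r"
  using Id_mult[of "sc c" k 0 x r] by simp

lemma Id_evp: "x \<in> Id k r \<Longrightarrow> evp x \<in> Id k r"
  by (rule Id_pointwise[of x k r x]) (simp_all add: R_evp)

lemma Id_odp: "x \<in> Id k r \<Longrightarrow> odp x \<in> Id k r"
  by (rule Id_pointwise[of x k r x]) (simp_all add: R_odp)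

lemma Id_top: assumes "x \<in> Id k (Suc k)" shows "x = 0"
proof (rule R_eqI, rule ext)
  fix S
  have "card (S \<inter> {1..k}) \<le> k"
    using card_mono[of "{1..k}" "S \<inter> {1..k}"] by simp
  show "R x S = R 0 S"
  proof (rule ccontr)
    assume "R x S \<noteq> R 0 S"
    then have "R x S \<noteq> 0" by (simp add: gzero_def)
    then have "Suc k \<le> card (S \<inter> {1..k})" using assms unfolding Id_def by blast
    with \<open>card (S \<inter> {1..k}) \<le> k\<close> show False by simp
  qed
qed

lemma Id_comm:
  assumes "odp x \<in> Id k r" "odp y \<in> Id k s" shows "x * y - y * x \<in> Id k (r + s)"
proof (subst comm_odp, rule Id_diff)
  show "odp x * odp y \<in> Id k (r + s)" by (rule Id_mult[OF assms])
  show "odp y * odp x \<in> Id k (r + s)" using Id_mult[OF assms(2,1)] by (simp add: add.commute)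
qed

definition gp :: "'a::field G list \<Rightarrow> 'a G" where "gp xs = foldr (*) xs 1"

lemma gp_Nil[simp]: "gp [] = 1" and gp_Cons[simp]: "gp (x # xs) = x * gp xs"
  by (simp_all add: gp_def)

lemma gp_append: "gp (xs @ ys) = gp xs * gp ys"
  by (induction xs) (simp_all add: mult.assoc)

fun gcp :: "'a::field G list \<Rightarrow> 'a G" where
  "gcp [] = 1"
| "gcp [a] = a"
| "gcp (a # b # r) = (a * b - b * a) * gcp r"

lemma gcp_append_even: "even (length xs) \<Longrightarrow> gcp (xs @ ys) = gcp xs * gcp ys"
  by (induction xs rule: gcp.induct) (simp_all add: mult.assoc)

lemma gcp_snoc: "even (length xs) \<Longrightarrow> gcp (xs @ [y]) = gcp xs * y"
  by (simp add: gcp_append_even)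

lemma gcp_snoc2: "even (length xs) \<Longrightarrow> gcp (xs @ [a, b]) = gcp xs * (a * b - b * a)"
  by (simp add: gcp_append_even)

lemma gcp_cen: "even (length xs) \<Longrightarrow> cen (gcp xs)"
  by (induction xs rule: gcp.induct) (simp_all add: cen_one cen_mult comm_cen)

lemma gprod_R: "gprod (map R xs) = R (gp xs)"
  by (induction xs) (simp_all add: gprod_def)

lemma gcomm_R: "gcomm (R a) (R b) = R (a * b - b * a)"
  by (simp add: gcomm_def)

lemma gcomm_prod_R: "gcomm_prod (map R xs) = R (gcp xs)"
  by (induction xs rule: gcp.induct) (simp_all add: gcomm_R)

lemma gp_Id:
  assumes "\<And>i. i \<in> set L \<Longrightarrow> w i \<in> Id k (rr i)"
  shows "gp (map w L) \<in> Id k (sum_list (map rr L))"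
  using assms by (induction L) (simp_all add: Id_mult)

lemma gcp_Id:
  assumes "\<And>i. i \<in> set L \<Longrightarrow> w i \<in> Id k (rr i)"
  shows "gcp (map w L) \<in> Id k (sum_list (map rr L))"
  using assms
proof (induction L rule: induct_list012)
  case (3 x y zs)
  have a: "w x * w y \<in> Id k (rr x + rr y)" by (rule Id_mult) (use 3 in auto)
  have b: "w y * w x \<in> Id k (rr x + rr y)" using Id_mult[of "w y" k "rr y" "w x" "rr x"] 3(3)
    by (simp add: add.commute)
  have "(w x * w y - w y * w x) * gcp (map w zs) \<in> Id k ((rr x + rr y) + sum_list (map rr zs))"
    by (rule Id_mult) (use Id_diff[OF a b] 3 in auto)
  then show ?case by (simp add: add.assoc)
qed simp_all

lemma gcp_Id_even:
  assumes "\<And>x. x \<in> set xs \<Longrightarrow> odp x \<in> Id k 1"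
  shows "gcp xs \<in> Id k (2 * (length xs div 2))"
  using assms
proof (induction xs rule: induct_list012)
  case (3 x y zs)
  have a: "x * y - y * x \<in> Id k (1 + 1)" by (rule Id_comm) (use 3 in auto)
  have "(x * y - y * x) * gcp zs \<in> Id k ((1 + 1) + 2 * (length zs div 2))"
    by (rule Id_mult) (use a 3 in auto)
  then show ?case by simp
qed simp_all

lemma gp_add:
  assumes "distinct L" "i \<in> set L"
  shows "gp (map (w(i := a + b)) L) = gp (map (w(i := a)) L) + gp (map (w(i := b)) L)"
  using assms
proof (induction L)
  case (Cons j L)
  show ?case
  proof (cases "j = i")
    case True
    then have "i \<notin> set L" using Cons by auto
    then have m: "\<And>v. map (w(i:=v)) L = map w L" by simp
    show ?thesis using True by (simp only: list.map fun_upd_same m gp_Cons distrib_right)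
  next
    case False
    then show ?thesis using Cons by (simp add: distrib_left)
  qed
qed simp

lemma gcp_add:
  assumes "distinct L" "i \<in> set L"
  shows "gcp (map (w(i := a + b)) L) = gcp (map (w(i := a)) L) + gcp (map (w(i := b)) L)"
  using assms
proof (induction L rule: induct_list012)
  case (3 x y zs)
  show ?case
  proof (cases "i = x")
    case True
    then have "x \<notin> set zs" "y \<noteq> x" using 3 by auto
    then have m: "\<And>v. map (w(x:=v)) zs = map w zs" "\<And>v. (w(x:=v)) y = w y" by simp_all
    show ?thesis unfolding True by (simp only: list.map fun_upd_same m gcp.simps) (simp add: algebra_simps)
  next
    case False
    show ?thesis
    proof (cases "i = y")
      case True
      then have "y \<notin> set zs" "x \<noteq> y" using 3 by auto
      then have m: "\<And>v. map (w(y:=v)) zs = map w zs" "\<And>v. (w(y:=v)) x = w x" by simp_all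
      show ?thesis unfolding True by (simp only: list.map fun_upd_same m gcp.simps) (simp add: algebra_simps)
    next
      case False2: False
      then have "i \<in> set zs" "distinct zs" using 3 False by auto
      have m: "\<And>v. (w(i:=v)) x = w x" "\<And>v. (w(i:=v)) y = w y" using False False2 by simp_all
      have IH: "gcp (map (w(i := a + b)) zs) = gcp (map (w(i := a)) zs) + gcp (map (w(i := b)) zs)"
        using 3(1) \<open>i \<in> set zs\<close> \<open>distinct zs\<close> by blast
      show ?thesis by (simp only: list.map m gcp.simps IH) (simp add: algebra_simps)
    qed
  qed
qed auto

lemma sl_insert_max:
  assumes "finite T" "\<And>x. x \<in> T \<Longrightarrow> x < a"
  shows "sorted_list_of_set (insert a T) = sorted_list_of_set T @ [(a::nat)]"
proof (rule sorted_distinct_set_unique)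
  have "a \<notin> T" using assms(2) by blast
  show "sorted (sorted_list_of_set (insert a T))" by simp
  show "distinct (sorted_list_of_set (insert a T))" by simp
  show "sorted (sorted_list_of_set T @ [a])"
    using assms by (auto simp: sorted_append less_imp_le)
  show "distinct (sorted_list_of_set T @ [a])" using assms \<open>a \<notin> T\<close> by simp
  have "set (sorted_list_of_set (insert a T)) = insert a T"
    by (rule set_sorted_list_of_set) (simp add: assms)
  then show "set (sorted_list_of_set (insert a T)) = set (sorted_list_of_set T @ [a])"
    using assms by simp
qed

lemma sl_Max:
  assumes "finite T" "T \<noteq> {}"
  shows "sorted_list_of_set T = sorted_list_of_set (T - {Max T}) @ [(Max T :: nat)]"
proof -
  have "T = insert (Max T) (T - {Max T})" using Max_in[OF assms] by blast
  moreover have "\<And>x. x \<in> T - {Max T} \<Longrightarrow> x < Max T"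
  proof -
    fix x assume x: "x \<in> T - {Max T}"
    then have "x \<le> Max T" using Max_ge[OF assms(1)] by blast
    moreover have "x \<noteq> Max T" using x by blast
    ultimately show "x < Max T" by simp
  qed
  ultimately show ?thesis using sl_insert_max[of "T - {Max T}" "Max T"] assms by simp
qed

lemma sum_split_sub:
  fixes f :: "nat set \<Rightarrow> 'b::comm_monoid_add"
  shows "(\<Sum>T\<in>{T. T \<subseteq> {1..Suc n} \<and> P T}. f T) =
    (\<Sum>T\<in>{T. T \<subseteq> {1..n} \<and> P T}. f T) +
    (\<Sum>T\<in>{T. T \<subseteq> {1..n} \<and> P (insert (Suc n) T)}. f (insert (Suc n) T))"
proof -
  let ?A = "{T. T \<subseteq> {1..n} \<and> P T}"
  let ?B = "{T. T \<subseteq> {1..n} \<and> P (insert (Suc n) T)}"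
  have e: "{T. T \<subseteq> {1..Suc n} \<and> P T} = ?A \<union> insert (Suc n) ` ?B"
  proof (rule set_eqI, rule iffI)
    fix T assume "T \<in> {T. T \<subseteq> {1..Suc n} \<and> P T}"
    then have T: "T \<subseteq> {1..Suc n}" "P T" by auto
    show "T \<in> ?A \<union> insert (Suc n) ` ?B"
    proof (cases "Suc n \<in> T")
      case True
      have e1: "T = insert (Suc n) (T - {Suc n})" using True by blast
      have "T - {Suc n} \<subseteq> {1..n}"
      proof
        fix x assume "x \<in> T - {Suc n}"
        then have "x \<in> {1..Suc n}" "x \<noteq> Suc n" using T by blast+
        then show "x \<in> {1..n}" by simp
      qed
      moreover have "P (insert (Suc n) (T - {Suc n}))" using T(2) e1 by simp
      ultimately have "T - {Suc n} \<in> ?B" by blast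
      with e1 have "T \<in> insert (Suc n) ` ?B" by (rule image_eqI)
      then show ?thesis by blast
    next
      case False
      have "T \<subseteq> {1..n}"
      proof
        fix x assume "x \<in> T"
        then have "x \<in> {1..Suc n}" "x \<noteq> Suc n" using T False by blast+
        then show "x \<in> {1..n}" by simp
      qed
      then show ?thesis using T by blast
    qed
  next
    fix T assume "T \<in> ?A \<union> insert (Suc n) ` ?B"
    then show "T \<in> {T. T \<subseteq> {1..Suc n} \<and> P T}"
    proof
      assume "T \<in> ?A" then show ?thesis by auto
    next
      assume "T \<in> insert (Suc n) ` ?B"
      then obtain X where "X \<in> ?B" "T = insert (Suc n) X" by blast
      then show ?thesis by auto
    qed
  qed
  have fA: "finite ?A" by (rule finite_subset[of _ "Pow {1..n}"]) auto
  have fB: "finite ?B" by (rule finite_subset[of _ "Pow {1..n}"]) auto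
  have d: "?A \<inter> insert (Suc n) ` ?B = {}"
  proof -
    have "Suc n \<notin> X" if "X \<in> ?A" for X using that by auto
    then show ?thesis by blast
  qed
  have inj: "inj_on (insert (Suc n)) ?B"
  proof (rule inj_onI)
    fix X Y assume "X \<in> ?B" "Y \<in> ?B" "insert (Suc n) X = insert (Suc n) Y"
    moreover have "Suc n \<notin> X" "Suc n \<notin> Y" using calculation by auto
    ultimately show "X = Y" by (metis Diff_insert_absorb)
  qed
  have "(\<Sum>T\<in>?A \<union> insert (Suc n) ` ?B. f T) = (\<Sum>T\<in>?A. f T) + (\<Sum>T\<in>insert (Suc n) ` ?B. f T)"
    by (rule sum.union_disjoint) (use fA fB d in simp_all)
  also have "(\<Sum>T\<in>insert (Suc n) ` ?B. f T) = (\<Sum>T\<in>?B. f (insert (Suc n) T))"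
    by (rule sum.reindex[OF inj, unfolded comp_def])
  finally show ?thesis unfolding e .
qed

definition XX :: "(nat \<Rightarrow> 'a::field G) \<Rightarrow> nat \<Rightarrow> nat set \<Rightarrow> 'a G" where
  "XX w n T = gp (map w (sorted_list_of_set ({1..n} - T))) * gcp (map w (sorted_list_of_set T))"

definition cf :: "nat set \<Rightarrow> 'a::field G" where
  "cf T = sc (inverse ((-2) ^ (card T div 2)))"

definition EVS :: "(nat \<Rightarrow> 'a::field G) \<Rightarrow> nat \<Rightarrow> 'a G" where
  "EVS w n = (\<Sum>T\<in>{T. T \<subseteq> {1..n} \<and> even (card T)}. cf T * XX w n T)"

definition ODS :: "(nat \<Rightarrow> 'a::field G) \<Rightarrow> nat \<Rightarrow> 'a G" where
  "ODS w n = (\<Sum>T\<in>{T. T \<subseteq> {1..n} \<and> odd (card T) \<and> od (w (Max T))}. cf T * XX w n T)"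

lemma sub_fin: "T \<subseteq> {1..(n::nat)} \<Longrightarrow> finite T"
  using finite_subset by blast

lemma sub_notin: "T \<subseteq> {1..(n::nat)} \<Longrightarrow> Suc n \<notin> T"
  by auto

lemma card_ins: "T \<subseteq> {1..n} \<Longrightarrow> card (insert (Suc n) T) = Suc (card T)"
  using sub_fin sub_notin by simp

lemma Max_ins: "T \<subseteq> {1..n} \<Longrightarrow> Max (insert (Suc n) T) = Suc n"
  by (rule Max_eqI) (use sub_fin in auto)

lemma cf_ins_even: "T \<subseteq> {1..n} \<Longrightarrow> even (card T) \<Longrightarrow> cf (insert (Suc n) T) = cf T"
  unfolding cf_def by (simp add: card_ins)

lemma cf_ins_odd:
  assumes "T \<subseteq> {1..n}" "odd (card T)"
  shows "cf (insert (Suc n) T) * 2 = - (cf T :: 'a::field_char_0 G)"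
proof -
  obtain j where j: "card T = 2 * j + 1" using assms(2) oddE by blast
  have c1: "card (insert (Suc n) T) div 2 = j + 1" using card_ins[OF assms(1)] j by simp
  have c2: "card T div 2 = j" using j by simp
  have nz: "((-2::'a) ^ j) \<noteq> 0" by simp
  have f: "inverse ((-2::'a) ^ (j + 1)) * 2 = - inverse ((-2) ^ j)"
    using nz by (simp add: field_simps)
  have "cf (insert (Suc n) T) * 2 = sc (inverse ((-2::'a) ^ (j + 1))) * sc 2"
    by (simp only: cf_def c1 sc_two)
  also have "\<dots> = sc (inverse ((-2::'a) ^ (j + 1)) * 2)" by (rule sc_mult[symmetric])
  also have "\<dots> = - cf T" unfolding f cf_def c2 by (simp add: sc_uminus)
  finally show ?thesis .
qed

lemma XX_out:
  assumes "T \<subseteq> {1..n}"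
  shows "XX w (Suc n) T = gp (map w (sorted_list_of_set ({1..n} - T))) * w (Suc n) *
    gcp (map w (sorted_list_of_set T))"
proof -
  have e: "{1..Suc n} - T = insert (Suc n) ({1..n} - T)" using assms by auto
  have "sorted_list_of_set ({1..Suc n} - T) = sorted_list_of_set ({1..n} - T) @ [Suc n]"
    unfolding e by (rule sl_insert_max) auto
  then show ?thesis unfolding XX_def by (simp add: gp_append)
qed

lemma XX_in:
  assumes "T \<subseteq> {1..n}"
  shows "XX w (Suc n) (insert (Suc n) T) = gp (map w (sorted_list_of_set ({1..n} - T))) *
    gcp (map w (sorted_list_of_set T) @ [w (Suc n)])"
proof -
  have e: "{1..Suc n} - insert (Suc n) T = {1..n} - T" using assms by auto
  have "sorted_list_of_set (insert (Suc n) T) = sorted_list_of_set T @ [Suc n]"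
    by (rule sl_insert_max) (use assms sub_fin in auto)
  then show ?thesis unfolding XX_def e by simp
qed

lemma gcp_odd_split:
  assumes "finite (T :: nat set)" "odd (card T)"
  shows "gcp (map w (sorted_list_of_set T) @ ys) =
    gcp (map w (sorted_list_of_set (T - {Max T}))) * gcp (w (Max T) # ys)"
proof -
  have ne: "T \<noteq> {}" using assms by auto
  have ev: "even (length (map w (sorted_list_of_set (T - {Max T}))))"
    using assms Max_in[OF assms(1) ne] by simp
  show ?thesis
    by (subst sl_Max[OF assms(1) ne]) (simp add: gcp_append_even[OF ev, symmetric])
qed

lemma gcp_even_cen:
  "finite T \<Longrightarrow> even (card T) \<Longrightarrow> cen (gcp (map w (sorted_list_of_set T)))"
  by (rule gcp_cen) simp

lemma gcp_even_snoc:
  "finite T \<Longrightarrow> even (card T) \<Longrightarrow> gcp (map w (sorted_list_of_set T) @ [y]) = gcp (map w (sorted_list_of_set T)) * y"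
  by (rule gcp_snoc) simp

lemma cenD: "cen x \<Longrightarrow> x * y = y * x" by (simp add: cen_def)

lemma term_out_even:
  assumes "T \<subseteq> {1..n}" "even (card T)"
  shows "XX w (Suc n) T = XX w n T * w (Suc n)"
proof -
  have c: "cen (gcp (map w (sorted_list_of_set T)))"
    by (rule gcp_even_cen) (use assms sub_fin in auto)
  show ?thesis
    by (subst XX_out[OF assms(1)]) (simp add: XX_def mult.assoc cenD[OF c])
qed

lemma gcp_odd_last:
  assumes "finite (T :: nat set)" "odd (card T)"
  shows "gcp (map w (sorted_list_of_set T)) = gcp (map w (sorted_list_of_set (T - {Max T}))) * w (Max T)"
  using gcp_odd_split[OF assms, of w "[]"] by simp

lemma gcp_odd_cen:
  assumes "finite (T :: nat set)" "odd (card T)"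
  shows "cen (gcp (map w (sorted_list_of_set (T - {Max T}))))"
proof -
  have ne: "T \<noteq> {}" using assms by auto
  show ?thesis by (rule gcp_cen) (use assms Max_in[OF assms(1) ne] in simp)
qed

lemma term_out_odd_cen:
  assumes "T \<subseteq> {1..n}" "odd (card T)" "cen (w (Suc n))"
  shows "XX w (Suc n) T = XX w n T * w (Suc n)"
  by (subst XX_out[OF assms(1)]) (simp add: XX_def mult.assoc cenD[OF assms(3)])

lemma term_out_odd_od:
  assumes "T \<subseteq> {1..n}" "odd (card T)" "od (w (Suc n))" "od (w (Max T))"
  shows "XX w (Suc n) T = - (XX w n T * w (Suc n))"
proof -
  have f: "finite T" using assms sub_fin by blast
  let ?P = "gp (map w (sorted_list_of_set ({1..n} - T)))"
  let ?C = "gcp (map w (sorted_list_of_set (T - {Max T})))"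
  have c: "cen ?C" by (rule gcp_odd_cen[OF f assms(2)])
  have a: "w (Suc n) * w (Max T) = - (w (Max T) * w (Suc n))" by (rule od_anti[OF assms(3,4)])
  have "XX w (Suc n) T = ?P * (w (Suc n) * ?C) * w (Max T)"
    unfolding XX_out[OF assms(1)] gcp_odd_last[OF f assms(2)] by (simp add: mult.assoc)
  also have "\<dots> = ?P * ?C * (w (Suc n) * w (Max T))" by (simp add: cenD[OF c] mult.assoc)
  also have "\<dots> = - (?P * ?C * w (Max T) * w (Suc n))" by (simp add: a mult.assoc)
  also have "?P * ?C * w (Max T) = XX w n T"
    unfolding XX_def gcp_odd_last[OF f assms(2)] by (simp add: mult.assoc)
  finally show ?thesis .
qed

lemma term_in_even:
  assumes "T \<subseteq> {1..n}" "even (card T)"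
  shows "XX w (Suc n) (insert (Suc n) T) = XX w n T * w (Suc n)"
  by (subst XX_in[OF assms(1)]) (simp add: XX_def gcp_even_snoc[OF sub_fin[OF assms(1)] assms(2)] mult.assoc)

lemma term_in_odd:
  assumes "T \<subseteq> {1..n}" "odd (card T)"
  shows "XX w (Suc n) (insert (Suc n) T) = gp (map w (sorted_list_of_set ({1..n} - T))) *
     gcp (map w (sorted_list_of_set (T - {Max T}))) * (w (Max T) * w (Suc n) - w (Suc n) * w (Max T))"
  unfolding XX_in[OF assms(1)] gcp_odd_split[OF sub_fin[OF assms(1)] assms(2)]
  by (simp add: mult.assoc)

lemma term_in_odd_zero:
  assumes "T \<subseteq> {1..n}" "odd (card T)" "cen (w (Suc n)) \<or> cen (w (Max T))"
  shows "XX w (Suc n) (insert (Suc n) T) = 0"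
proof -
  have "w (Max T) * w (Suc n) - w (Suc n) * w (Max T) = 0"
    using assms(3) cenD by (metis right_minus_eq)
  then show ?thesis unfolding term_in_odd[OF assms(1,2)] by simp
qed

lemma term_in_odd_od:
  assumes "T \<subseteq> {1..n}" "odd (card T)" "od (w (Suc n))" "od (w (Max T))"
  shows "XX w (Suc n) (insert (Suc n) T) = 2 * (XX w n T * w (Suc n))"
proof -
  have f: "finite T" using assms sub_fin by blast
  have a: "w (Suc n) * w (Max T) = - (w (Max T) * w (Suc n))" by (rule od_anti[OF assms(3,4)])
  have "XX w (Suc n) (insert (Suc n) T) = gp (map w (sorted_list_of_set ({1..n} - T))) *
     gcp (map w (sorted_list_of_set (T - {Max T}))) * (w (Max T) * w (Suc n) + w (Max T) * w (Suc n))"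
    unfolding term_in_odd[OF assms(1,2)] a by simp
  also have "\<dots> = XX w n T * w (Suc n) + XX w n T * w (Suc n)"
    unfolding XX_def gcp_odd_last[OF f assms(2)] by (simp add: mult.assoc distrib_left)
  finally show ?thesis by (simp add: mult_2)
qed

lemma fin_sub_sets: "finite {T. T \<subseteq> {1..(n::nat)} \<and> P T}"
  by (rule finite_subset[of _ "Pow {1..n}"]) auto

lemma Max_sub:
  assumes "T \<subseteq> {1..n}" "odd (card T)" shows "Max T \<in> {1..Suc n}"
proof -
  have "T \<noteq> {}" using assms(2) by auto
  then have "Max T \<in> T" using Max_in sub_fin[OF assms(1)] by blast
  then show ?thesis using assms(1) by auto
qed

lemma pure_cen:
  assumes "\<forall>i\<in>{1..Suc n}. ev (w i) \<or> od (w i)" "i \<in> {1..Suc n}" "\<not> od (w i)"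
  shows "cen (w i)"
  using assms ev_cen by blast

lemma sum_first_part:
  assumes "\<And>T. T \<in> AA \<Longrightarrow> XX w (Suc n) T = XX w n T * y"
  shows "(\<Sum>T\<in>AA. cf T * XX w (Suc n) T) = (\<Sum>T\<in>AA. cf T * XX w n T) * y"
  using assms by (simp add: sum_distrib_right mult.assoc)

lemma EVS_step:
  fixes w :: "nat \<Rightarrow> 'a::field_char_0 G"
  assumes pure: "\<forall>i\<in>{1..Suc n}. ev (w i) \<or> od (w i)"
  shows "EVS w (Suc n) = (if od (w (Suc n)) then (EVS w n - ODS w n) * w (Suc n) else EVS w n * w (Suc n))"
proof -
  let ?A = "{T. T \<subseteq> {1..n} \<and> even (card T)}"
  let ?B = "{T. T \<subseteq> {1..n} \<and> odd (card T)}"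
  let ?F = "{T. T \<subseteq> {1..n} \<and> odd (card T) \<and> od (w (Max T))}"
  have B: "{T. T \<subseteq> {1..n} \<and> even (card (insert (Suc n) T))} = ?B"
    using card_ins by fastforce
  have sp: "EVS w (Suc n) = (\<Sum>T\<in>?A. cf T * XX w (Suc n) T) +
      (\<Sum>T\<in>?B. cf (insert (Suc n) T) * XX w (Suc n) (insert (Suc n) T))"
    unfolding EVS_def sum_split_sub[of _ n] B ..
  have S1: "(\<Sum>T\<in>?A. cf T * XX w (Suc n) T) = EVS w n * w (Suc n)"
    unfolding EVS_def by (rule sum_first_part) (simp add: term_out_even)
  show ?thesis
  proof (cases "od (w (Suc n))")
    case False
    have c: "cen (w (Suc n))" by (rule pure_cen[OF pure _ False]) simp
    have "(\<Sum>T\<in>?B. cf (insert (Suc n) T) * XX w (Suc n) (insert (Suc n) T)) = 0"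
      by (rule sum.neutral) (simp add: term_in_odd_zero c)
    then show ?thesis using sp S1 False by simp
  next
    case True
    have "(\<Sum>T\<in>?B. cf (insert (Suc n) T) * XX w (Suc n) (insert (Suc n) T)) =
        (\<Sum>T\<in>?B. if od (w (Max T)) then - (cf T * XX w n T * w (Suc n)) else 0)"
    proof (rule sum.cong)
      fix T assume T: "T \<in> ?B"
      then have T1: "T \<subseteq> {1..n}" "odd (card T)" by auto
      show "cf (insert (Suc n) T) * XX w (Suc n) (insert (Suc n) T) =
        (if od (w (Max T)) then - (cf T * XX w n T * w (Suc n)) else 0)"
      proof (cases "od (w (Max T))")
        case True2: True
        have "cf (insert (Suc n) T) * XX w (Suc n) (insert (Suc n) T) =
            (cf (insert (Suc n) T) * 2) * (XX w n T * w (Suc n))"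
          by (simp add: term_in_odd_od[OF T1 True True2] mult.assoc)
        also have "\<dots> = - (cf T * XX w n T * w (Suc n))"
          by (simp add: cf_ins_odd[OF T1] mult.assoc)
        finally show ?thesis using True2 by simp
      next
        case False2: False
        have "cen (w (Max T))" by (rule pure_cen[OF pure Max_sub[OF T1] False2])
        then show ?thesis using False2 by (simp add: term_in_odd_zero[OF T1])
      qed
    qed simp
    also have "\<dots> = (\<Sum>T\<in>?F. - (cf T * XX w n T * w (Suc n)))"
    proof -
      have e: "?F = {T \<in> ?B. od (w (Max T))}" by auto
      show ?thesis unfolding e by (rule sum.inter_filter[symmetric]) (rule fin_sub_sets)
    qed
    also have "\<dots> = - (ODS w n * w (Suc n))"
      unfolding ODS_def by (simp add: sum_negf sum_distrib_right)
    finally show ?thesis using sp S1 True by (simp add: algebra_simps)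
  qed
qed

lemma ODS_step:
  fixes w :: "nat \<Rightarrow> 'a::field_char_0 G"
  assumes pure: "\<forall>i\<in>{1..Suc n}. ev (w i) \<or> od (w i)"
  shows "ODS w (Suc n) = (if od (w (Suc n)) then (EVS w n - ODS w n) * w (Suc n) else ODS w n * w (Suc n))"
proof -
  let ?A = "{T. T \<subseteq> {1..n} \<and> even (card T)}"
  let ?F = "{T. T \<subseteq> {1..n} \<and> odd (card T) \<and> od (w (Max T))}"
  let ?B = "{T. T \<subseteq> {1..n} \<and> odd (card (insert (Suc n) T)) \<and> od (w (Max (insert (Suc n) T)))}"
  have sp: "ODS w (Suc n) = (\<Sum>T\<in>?F. cf T * XX w (Suc n) T) +
      (\<Sum>T\<in>?B. cf (insert (Suc n) T) * XX w (Suc n) (insert (Suc n) T))"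
    unfolding ODS_def sum_split_sub[of _ n] ..
  have B0: "(T \<subseteq> {1..n} \<and> odd (card (insert (Suc n) T)) \<and> od (w (Max (insert (Suc n) T)))) =
      (T \<subseteq> {1..n} \<and> even (card T) \<and> od (w (Suc n)))" for T
  proof (cases "T \<subseteq> {1..n}")
    case True then show ?thesis by (simp add: card_ins Max_ins)
  qed simp
  have B: "?B = (if od (w (Suc n)) then ?A else {})"
    unfolding B0 by auto
  show ?thesis
  proof (cases "od (w (Suc n))")
    case False
    have c: "cen (w (Suc n))" by (rule pure_cen[OF pure _ False]) simp
    have "(\<Sum>T\<in>?F. cf T * XX w (Suc n) T) = ODS w n * w (Suc n)"
      unfolding ODS_def by (rule sum_first_part) (simp add: term_out_odd_cen c)
    moreover have E: "?B = {}" using B False by simp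
    ultimately show ?thesis unfolding sp E using False by simp
  next
    case True
    have E: "?B = ?A" using B True by simp
    have S1: "(\<Sum>T\<in>?F. cf T * XX w (Suc n) T) = - (ODS w n * w (Suc n))"
      unfolding ODS_def
      by (simp add: term_out_odd_od True sum_negf sum_distrib_right mult.assoc)
    have S2: "(\<Sum>T\<in>?A. cf (insert (Suc n) T) * XX w (Suc n) (insert (Suc n) T)) = EVS w n * w (Suc n)"
      unfolding EVS_def
      by (simp add: term_in_even cf_ins_even sum_distrib_right mult.assoc)
    show ?thesis unfolding sp E S1 S2 using True by (simp add: algebra_simps)
  qed
qed

lemma od_set_Suc:
  "{i \<in> {1..Suc n}. od (w i)} = {i \<in> {1..n}. od (w i)} \<union> (if od (w (Suc n)) then {Suc n} else {})"
  by (auto simp: le_Suc_eq)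

lemma EO_zero:
  fixes w :: "nat \<Rightarrow> 'a::field_char_0 G"
  assumes "\<forall>i\<in>{1..n}. ev (w i) \<or> od (w i)"
  shows "(1 \<le> card {i \<in> {1..n}. od (w i)} \<longrightarrow> EVS w n = ODS w n) \<and>
         (2 \<le> card {i \<in> {1..n}. od (w i)} \<longrightarrow> EVS w n = 0)"
  using assms
proof (induction n)
  case 0
  then show ?case by simp
next
  case (Suc n)
  have pn: "\<forall>i\<in>{1..n}. ev (w i) \<or> od (w i)" using Suc.prems by auto
  note IH = Suc.IH[OF pn]
  note es = EVS_step[OF Suc.prems] and os = ODS_step[OF Suc.prems]
  have fin: "finite {i \<in> {1..n}. od (w i)}" by simp
  show ?case
  proof (cases "od (w (Suc n))")
    case True
    have "{i \<in> {1..Suc n}. od (w i)} = insert (Suc n) {i \<in> {1..n}. od (w i)}"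
      unfolding od_set_Suc using True by auto
    then have c: "card {i \<in> {1..Suc n}. od (w i)} = Suc (card {i \<in> {1..n}. od (w i)})"
      using fin by simp
    show ?thesis using IH True c es os by auto
  next
    case False
    have "{i \<in> {1..Suc n}. od (w i)} = {i \<in> {1..n}. od (w i)}"
      unfolding od_set_Suc using False by simp
    then have c: "card {i \<in> {1..Suc n}. od (w i)} = card {i \<in> {1..n}. od (w i)}" by simp
    have e1: "EVS w (Suc n) = EVS w n * w (Suc n)" using es False by simp
    have e2: "ODS w (Suc n) = ODS w n * w (Suc n)" using os False by simp
    show ?thesis unfolding e1 e2 c
    proof (intro conjI impI)
      assume "1 \<le> card {i \<in> {1..n}. od (w i)}"
      then have "EVS w n = ODS w n" using IH by blast
      then show "EVS w n * w (Suc n) = ODS w n * w (Suc n)" by simp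
    next
      assume "2 \<le> card {i \<in> {1..n}. od (w i)}"
      then have "EVS w n = 0" using IH by blast
      then show "EVS w n * w (Suc n) = 0" by simp
    qed
  qed
qed

lemma sl_sum: "finite S \<Longrightarrow> sum_list (map rr (sorted_list_of_set S)) = sum rr (S :: nat set)"
  by (simp add: sum_list_distinct_conv_sum_set)

lemma XX_Id:
  assumes "\<And>i. i \<in> {1..n} \<Longrightarrow> w i \<in> Id k (rr i)" "T \<subseteq> {1..n}"
  shows "XX w n T \<in> Id k (sum rr {1..n})"
proof -
  have f: "finite T" using assms(2) sub_fin by blast
  have a: "gp (map w (sorted_list_of_set ({1..n} - T))) \<in> Id k (sum rr ({1..n} - T))"
    using gp_Id[of "sorted_list_of_set ({1..n} - T)" w k rr] assms(1) by (simp add: sl_sum)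
  have b0: "gcp (map w (sorted_list_of_set T)) \<in> Id k (sum_list (map rr (sorted_list_of_set T)))"
    by (rule gcp_Id) (use assms f in auto)
  then have b: "gcp (map w (sorted_list_of_set T)) \<in> Id k (sum rr T)"
    using f by (simp add: sl_sum)
  have "sum rr {1..n} = sum rr ({1..n} - T) + sum rr T"
    by (rule sum.subset_diff[OF assms(2)]) simp
  then show ?thesis unfolding XX_def using Id_mult[OF a b] by simp
qed

lemma EVS_Id:
  assumes "\<And>i. i \<in> {1..n} \<Longrightarrow> w i \<in> Id k (rr i)"
  shows "EVS w n \<in> Id k (sum rr {1..n})"
  unfolding EVS_def cf_def by (rule Id_sum, rule Id_sc, rule XX_Id) (use assms in auto)

definition pu :: "nat \<Rightarrow> 'a::field G \<Rightarrow> bool" where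
  "pu k x \<longleftrightarrow> (ev x \<and> x \<in> Id k 1) \<or> od x"

lemma EVS_pure:
  fixes w :: "nat \<Rightarrow> 'a::field_char_0 G"
  assumes "\<forall>i\<in>{1..n}. pu k (w i)"
  shows "EVS w n \<in> Id k (n - 1)"
proof -
  have p: "\<forall>i\<in>{1..n}. ev (w i) \<or> od (w i)" using assms unfolding pu_def by blast
  show ?thesis
  proof (cases "2 \<le> card {i \<in> {1..n}. od (w i)}")
    case True
    then have "EVS w n = 0" using EO_zero[OF p] by blast
    then show ?thesis by simp
  next
    case False
    define rr where "rr i = (if w i \<in> Id k 1 then 1 else (0::nat))" for i
    have wi: "w i \<in> Id k (rr i)" for i by (simp add: rr_def)
    let ?B = "{i \<in> {1..n}. w i \<notin> Id k 1}"
    have Bsub: "?B \<subseteq> {i \<in> {1..n}. od (w i)}" using assms unfolding pu_def by blast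
    have cB: "card ?B \<le> 1"
      using card_mono[OF _ Bsub] False by simp
    have "sum rr {1..n} = sum rr ({1..n} - ?B) + sum rr ?B"
      by (rule sum.subset_diff) auto
    also have "sum rr ({1..n} - ?B) = card ({1..n} - ?B)"
      by (simp add: rr_def)
    also have "card ({1..n} - ?B) = n - card ?B"
      by (subst card_Diff_subset) auto
    finally have "n - 1 \<le> sum rr {1..n}" using cB by linarith
    then show ?thesis using EVS_Id[of n w k rr] wi Id_mono by blast
  qed
qed

lemma XX_add:
  assumes "i \<in> {1..n}" "T \<subseteq> {1..n}"
  shows "XX (w(i := a + b)) n T = XX (w(i := a)) n T + XX (w(i := b)) n T"
proof -
  have f: "finite T" using assms(2) sub_fin by blast
  let ?L1 = "sorted_list_of_set ({1..n} - T)"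
  let ?L2 = "sorted_list_of_set T"
  have d1: "distinct ?L1" and d2: "distinct ?L2" by simp_all
  show ?thesis
  proof (cases "i \<in> T")
    case True
    then have "i \<notin> set ?L1" by simp
    then have m: "\<And>v. map (w(i := v)) ?L1 = map w ?L1" by simp
    have "i \<in> set ?L2" using True f by simp
    from gcp_add[OF d2 this, of w a b] show ?thesis
      unfolding XX_def m by (simp add: distrib_left)
  next
    case False
    then have "i \<notin> set ?L2" using f by simp
    then have m: "\<And>v. map (w(i := v)) ?L2 = map w ?L2" by simp
    have "i \<in> set ?L1" using False assms(1) by simp
    from gp_add[OF d1 this, of w a b] show ?thesis
      unfolding XX_def m by (simp add: distrib_right)
  qed
qed

lemma EVS_add:
  assumes "i \<in> {1..n}"
  shows "EVS (w(i := a + b)) n = EVS (w(i := a)) n + EVS (w(i := b)) n"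
  unfolding EVS_def sum.distrib[symmetric]
  by (rule sum.cong) (simp_all add: XX_add[OF assms] distrib_left)

lemma evp_evp: "evp (evp x) = evp x"
  by (rule R_eqI, rule ext) (simp add: R_evp)

lemma evp_odp0: "evp (odp x) = 0"
  by (rule R_eqI, rule ext) (simp add: R_evp R_odp gzero_def)

lemma EVS_good:
  fixes w :: "nat \<Rightarrow> 'a::field_char_0 G"
  assumes "\<forall>i\<in>{1..n}. evp (w i) \<in> Id k 1"
  shows "EVS w n \<in> Id k (n - 1)"
proof -
  have main: "\<And>w :: nat \<Rightarrow> 'a G. card {i \<in> {1..n}. \<not> pu k (w i)} = N \<Longrightarrow>
      \<forall>i\<in>{1..n}. evp (w i) \<in> Id k 1 \<Longrightarrow> EVS w n \<in> Id k (n - 1)" for N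
  proof (induction N)
    case 0
    have "{i \<in> {1..n}. \<not> pu k (w i)} = {}" using 0(1) by simp
    then have "\<forall>i\<in>{1..n}. pu k (w i)" by blast
    then show ?case by (rule EVS_pure)
  next
    case (Suc N)
    then have "card {i \<in> {1..n}. \<not> pu k (w i)} \<noteq> 0" by simp
    then have "{i \<in> {1..n}. \<not> pu k (w i)} \<noteq> {}" by (metis card.empty)
    then obtain i where i: "i \<in> {1..n}" "\<not> pu k (w i)" by blast
    define w1 where "w1 = w(i := evp (w i))"
    define w2 where "w2 = w(i := odp (w i))"
    have "w = w(i := evp (w i) + odp (w i))" by (simp add: evp_odp)
    then have e: "EVS w n = EVS w1 n + EVS w2 n"
      unfolding w1_def w2_def using EVS_add[OF i(1), of w "evp (w i)" "odp (w i)"] by simp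
    have p1: "pu k (evp (w i))" using Suc.prems(2) i(1) by (simp add: pu_def ev_evp)
    have p2: "pu k (odp (w i))" by (simp add: pu_def od_odp)
    have s1: "{j \<in> {1..n}. \<not> pu k (w1 j)} = {j \<in> {1..n}. \<not> pu k (w j)} - {i}"
      unfolding w1_def using p1 by auto
    have s2: "{j \<in> {1..n}. \<not> pu k (w2 j)} = {j \<in> {1..n}. \<not> pu k (w j)} - {i}"
      unfolding w2_def using p2 by auto
    have c: "card ({j \<in> {1..n}. \<not> pu k (w j)} - {i}) = N"
      using Suc.prems(1) i by simp
    have g1: "\<forall>j\<in>{1..n}. evp (w1 j) \<in> Id k 1"
      unfolding w1_def using Suc.prems(2) by (simp add: evp_evp)
    have g2: "\<forall>j\<in>{1..n}. evp (w2 j) \<in> Id k 1"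
      unfolding w2_def using Suc.prems(2) by (simp add: evp_odp0)
    have "EVS w1 n \<in> Id k (n - 1)" by (rule Suc.IH) (use s1 c g1 in simp_all)
    moreover have "EVS w2 n \<in> Id k (n - 1)" by (rule Suc.IH) (use s2 c g2 in simp_all)
    ultimately show ?case unfolding e by (rule Id_add)
  qed
  show ?thesis by (rule main[OF refl assms])
qed

lemma R_sum_app: "R (sum f S) U = (\<Sum>i\<in>S. R (f i) U)"
  by (induction S rule: infinite_finite_induct) (simp_all add: gzero_def gadd_def)

lemma gsum_R: "gsum (\<lambda>i. R (f i)) S = R (sum f S)"
  by (rule ext) (simp add: gsum_def R_sum_app)

lemma map_RA: "(\<And>i. i \<in> set L \<Longrightarrow> z i \<in> grass_carrier) \<Longrightarrow> map z L = map R (map (\<lambda>i. A (z i)) L)"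
  by (induction L) simp_all

lemma gpoly_R:
  assumes "m \<noteq> 1" "\<And>i. i \<in> {1..m} \<Longrightarrow> z i \<in> grass_carrier"
  shows "gpoly m z = R (EVS (\<lambda>i. A (z i)) m)"
proof -
  let ?w = "\<lambda>i. A (z i)"
  have fT: "fT m z T = R (XX ?w m T)" if "T \<subseteq> {1..m}" for T
  proof -
    have f: "finite T" using that sub_fin by blast
    have e1: "map z (sorted_list_of_set ({1..m} - T)) = map R (map ?w (sorted_list_of_set ({1..m} - T)))"
      by (rule map_RA) (use assms(2) in auto)
    have e2: "map z (sorted_list_of_set T) = map R (map ?w (sorted_list_of_set T))"
      by (rule map_RA) (use assms(2) that f in auto)
    show ?thesis unfolding fT_def XX_def e1 e2 gprod_R gcomm_prod_R by simp
  qed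
  have "gpoly m z = gsum (\<lambda>T. R (cf T * XX ?w m T)) {T. T \<subseteq> {1..m} \<and> even (card T)}"
    unfolding gpoly_def using assms(1)
    by (simp add: gsum_def fT cf_def scl_sc[symmetric])
  also have "\<dots> = R (EVS ?w m)" unfolding gsum_R EVS_def ..
  finally show ?thesis .
qed

lemma Ek_car: "x \<in> Ek_comp k n \<Longrightarrow> x \<in> grass_carrier"
  by (simp add: Ek_comp_def)

lemma card_split:
  assumes "finite (S :: nat set)" "0 \<notin> S"
  shows "card S = card (S \<inter> {1..k}) + card {i \<in> S. k < i}"
proof -
  have "S = (S \<inter> {1..k}) \<union> {i \<in> S. k < i}"
  proof (rule set_eqI)
    fix x show "x \<in> S \<longleftrightarrow> x \<in> (S \<inter> {1..k}) \<union> {i \<in> S. k < i}"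
    proof (cases "x \<le> k")
      case True then show ?thesis using assms(2) by (cases "x = 0") (auto simp: Suc_le_eq)
    next
      case False then show ?thesis by auto
    qed
  qed
  moreover have "(S \<inter> {1..k}) \<inter> {i \<in> S. k < i} = {}" by auto
  ultimately show ?thesis using assms(1) by (metis (no_types, lifting) card_Un_disjoint finite_Un)
qed

lemma Ek_odd_evp:
  assumes "x \<in> Ek_comp k n" "odd n"
  shows "evp (A x) \<in> Id k 1"
  unfolding Id_def
proof (intro CollectI allI impI)
  fix S assume h: "R (evp (A x)) S \<noteq> 0"
  have xc: "x \<in> grass_carrier" using assms(1) by (rule Ek_car)
  have "even (card S)" "x S \<noteq> 0" using h xc by (simp_all add: R_evp split: if_splits)
  then have fS: "finite S" "0 \<notin> S" "int (card {i \<in> S. k < i}) = n"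
    using xc assms(1) carrierD[OF xc] by (auto simp: Ek_comp_def)
  then have "odd (card {i \<in> S. k < i})" using assms(2) unfolding fS(3)[symmetric] by simp
  then have "odd (card (S \<inter> {1..k}))" using card_split[OF fS(1,2), of k] \<open>even (card S)\<close> by simp
  then show "1 \<le> card (S \<inter> {1..k})" by (metis odd_pos One_nat_def Suc_leI)
qed

lemma Ek_even_odp:
  assumes "x \<in> Ek_comp k n" "even n"
  shows "odp (A x) \<in> Id k 1"
  unfolding Id_def
proof (intro CollectI allI impI)
  fix S assume h: "R (odp (A x)) S \<noteq> 0"
  have xc: "x \<in> grass_carrier" using assms(1) by (rule Ek_car)
  have "odd (card S)" "x S \<noteq> 0" using h xc by (simp_all add: R_odp split: if_splits)
  then have fS: "finite S" "0 \<notin> S" "int (card {i \<in> S. k < i}) = n"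
    using xc assms(1) carrierD[OF xc] by (auto simp: Ek_comp_def)
  then have "even (card {i \<in> S. k < i})" using assms(2) unfolding fS(3)[symmetric] by simp
  then have "odd (card (S \<inter> {1..k}))" using card_split[OF fS(1,2), of k] \<open>odd (card S)\<close> by simp
  then show "1 \<le> card (S \<inter> {1..k})" by (metis odd_pos One_nat_def Suc_leI)
qed

lemma Id_R_zero: "X \<in> Id k (Suc k) \<Longrightarrow> R X = gzero"
  using Id_top by fastforce

lemma gcomm_RA: "x \<in> grass_carrier \<Longrightarrow> y \<in> grass_carrier \<Longrightarrow> gcomm x y = R (A x * A y - A y * A x)"
  using gcomm_R[of "A x" "A y"] by simp

lemma map_Ek:
  assumes "\<And>i. i \<in> set L \<Longrightarrow> \<exists>n. u i \<in> Ek_comp k n"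
  shows "map u L = map R (map (\<lambda>i. A (u i)) L)"
  by (rule map_RA) (use assms Ek_car in blast)

lemma gcp_Ek:
  assumes "\<And>i. i \<in> set L \<Longrightarrow> \<exists>n. 0 \<le> n \<and> even n \<and> u i \<in> Ek_comp k n"
  shows "gcp (map (\<lambda>i. A (u i)) L) \<in> Id k (2 * (length L div 2))"
proof -
  have "\<And>x. x \<in> set (map (\<lambda>i. A (u i)) L) \<Longrightarrow> odp x \<in> Id k 1"
  proof -
    fix x assume "x \<in> set (map (\<lambda>i. A (u i)) L)"
    then obtain i where i: "i \<in> set L" "x = A (u i)" by auto
    then obtain n where "even n" "u i \<in> Ek_comp k n" using assms by blast
    then show "odp x \<in> Id k 1" using i Ek_even_odp by blast
  qed
  then show ?thesis using gcp_Id_even by fastforce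
qed

lemma Ek_odp1:
  assumes "\<exists>n. 0 \<le> n \<and> even n \<and> u \<in> Ek_comp k n"
  shows "odp (A u) \<in> Id k 1"
  using assms Ek_even_odp by blast

lemma gmult_RR: "gmult (R a) (R b) = R (a * b)" by simp

theorem mainTheorem13:
  fixes k :: nat
  assumes "0 < k"
  shows
   \<comment> \<open>(1)\<close>
   "(\<forall>n::int. n < 0 \<longrightarrow> (\<forall>x \<in> (Ek_comp k n :: 'a::field_char_0 grass set). x = gzero))
   \<comment> \<open>(2)\<close>
  \<and> (\<forall>n1 n2 n3 :: int. \<forall>x1 \<in> (Ek_comp k n1 :: 'a grass set). \<forall>x2 \<in> Ek_comp k n2.
       \<forall>x3 \<in> Ek_comp k n3. gcomm (gcomm x1 x2) x3 = gzero)
   \<comment> \<open>(3)\<close>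
  \<and> (even k \<longrightarrow> (\<forall>(y :: nat \<Rightarrow> 'a grass) n x.
       (\<forall>i \<in> {1..k+1}. y i \<in> Ek_comp k 0) \<longrightarrow> x \<in> Ek_comp k n \<longrightarrow>
       gmult (gcomm_prod (map y [1..<k+1])) (gcomm (y (k+1)) x) = gzero))
   \<comment> \<open>(4)\<close>
  \<and> (odd k \<longrightarrow> (\<forall>(y :: nat \<Rightarrow> 'a grass).
       (\<forall>i \<in> {1..k+1}. y i \<in> Ek_comp k 0) \<longrightarrow>
       gmult (gcomm_prod (map y [1..<k])) (gcomm (y k) (y (k+1))) = gzero))
   \<comment> \<open>(5)\<close>
  \<and> (\<forall>l (z :: nat \<Rightarrow> 'a grass) (u :: nat \<Rightarrow> 'a grass). l \<le> k \<longrightarrow> even l \<longrightarrow>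
       (\<forall>i \<in> {1..k-l+2}. \<exists>n. 0 < n \<and> odd n \<and> z i \<in> Ek_comp k n) \<longrightarrow>
       (\<forall>i \<in> {1..l}. \<exists>n. 0 \<le> n \<and> even n \<and> u i \<in> Ek_comp k n) \<longrightarrow>
       gmult (gpoly (k-l+2) z) (gcomm_prod (map u [1..<l+1])) = gzero)
   \<comment> \<open>(6)\<close>
  \<and> (\<forall>l (z :: nat \<Rightarrow> 'a grass) (u :: nat \<Rightarrow> 'a grass). l \<le> k \<longrightarrow> odd l \<longrightarrow>
       (\<forall>i \<in> {1..k-l+2}. \<exists>n. 0 < n \<and> odd n \<and> z i \<in> Ek_comp k n) \<longrightarrow>
       (\<forall>i \<in> {1..l}. \<exists>n. 0 \<le> n \<and> even n \<and> u i \<in> Ek_comp k n) \<longrightarrow>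
       gmult (gcomm (gpoly (k-l+2) z) (u 1)) (gcomm_prod (map u [2..<l+1])) = gzero)
   \<comment> \<open>(7)\<close>
  \<and> (\<forall>l (z :: nat \<Rightarrow> 'a grass) (u :: nat \<Rightarrow> 'a grass). l \<le> k \<longrightarrow> odd l \<longrightarrow>
       (\<forall>i \<in> {1..k-l+3}. \<exists>n. 0 < n \<and> odd n \<and> z i \<in> Ek_comp k n) \<longrightarrow>
       (\<forall>i \<in> {1..l}. \<exists>n. 0 \<le> n \<and> even n \<and> u i \<in> Ek_comp k n) \<longrightarrow>
       gmult (gmult (gpoly (k-l+2) z) (gcomm (z (k-l+3)) (u 1)))
             (gcomm_prod (map u [2..<l+1])) = gzero)"
proof (intro conjI)
  show "\<forall>n::int. n < 0 \<longrightarrow> (\<forall>x \<in> (Ek_comp k n :: 'a::field_char_0 grass set). x = gzero)"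
  proof (intro allI impI ballI)
    fix n :: int and x :: "'a grass" assume n: "n < 0" and x: "x \<in> Ek_comp k n"
    show "x = gzero"
    proof
      fix S show "x S = gzero S"
      proof (rule ccontr)
        assume "x S \<noteq> gzero S"
        then have "x S \<noteq> 0" by (simp add: gzero_def)
        then have "int (card {i \<in> S. k < i}) = n" using x by (simp add: Ek_comp_def)
        then show False using n by simp
      qed
    qed
  qed
next
  show "\<forall>n1 n2 n3 :: int. \<forall>x1 \<in> (Ek_comp k n1 :: 'a grass set). \<forall>x2 \<in> Ek_comp k n2.
       \<forall>x3 \<in> Ek_comp k n3. gcomm (gcomm x1 x2) x3 = gzero"
  proof (intro allI ballI)
    fix n1 n2 n3 :: int and x1 x2 x3 :: "'a grass"
    assume "x1 \<in> Ek_comp k n1" "x2 \<in> Ek_comp k n2" "x3 \<in> Ek_comp k n3"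
    then have c: "x1 \<in> grass_carrier" "x2 \<in> grass_carrier" "x3 \<in> grass_carrier" by (simp_all add: Ek_car)
    let ?c = "A x1 * A x2 - A x2 * A x1"
    have "gcomm (gcomm x1 x2) x3 = gcomm (R ?c) (R (A x3))" using c by (simp add: gcomm_RA)
    also have "\<dots> = R (?c * A x3 - A x3 * ?c)" by (rule gcomm_R)
    also have "?c * A x3 - A x3 * ?c = 0" using cenD[OF comm_cen] by simp
    finally show "gcomm (gcomm x1 x2) x3 = gzero" by simp
  qed
next
  show "even k \<longrightarrow> (\<forall>(y :: nat \<Rightarrow> 'a grass) n x.
       (\<forall>i \<in> {1..k+1}. y i \<in> Ek_comp k 0) \<longrightarrow> x \<in> Ek_comp k n \<longrightarrow>
       gmult (gcomm_prod (map y [1..<k+1])) (gcomm (y (k+1)) x) = gzero)"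
  proof (intro impI allI)
    fix y :: "nat \<Rightarrow> 'a grass" and n :: int and x :: "'a grass"
    assume ek: "even k" and y: "\<forall>i \<in> {1..k+1}. y i \<in> Ek_comp k 0" and x: "x \<in> Ek_comp k n"
    let ?w = "\<lambda>i. A (y i)"
    have m: "map y [1..<k+1] = map R (map ?w [1..<k+1])"
      by (rule map_Ek) (use y in auto)
    have g: "gcp (map ?w [1..<k+1]) \<in> Id k (2 * (length [1..<k+1] div 2))"
      by (rule gcp_Ek) (use y in \<open>auto intro!: exI[of _ 0]\<close>)
    have len: "2 * (length [1..<k+1] div 2) = k" using ek by simp
    have g': "gcp (map ?w [1..<k+1]) \<in> Id k k" using g unfolding len .
    have o1: "odp (?w (k+1)) \<in> Id k 1" by (rule Ek_odp1) (use y in \<open>auto intro!: exI[of _ 0]\<close>)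
    have cm: "?w (k+1) * A x - A x * ?w (k+1) \<in> Id k (1 + 0)"
      by (rule Id_comm[OF o1]) simp
    have "y (k+1) \<in> Ek_comp k 0" using y by simp
    then have xc: "x \<in> grass_carrier" "y (k+1) \<in> grass_carrier" using x Ek_car by blast+
    have "gmult (gcomm_prod (map y [1..<k+1])) (gcomm (y (k+1)) x) =
        R (gcp (map ?w [1..<k+1]) * (?w (k+1) * A x - A x * ?w (k+1)))"
      unfolding m gcomm_prod_R gcomm_RA[OF xc(2,1)] by simp
    also have "\<dots> = gzero"
      by (rule Id_R_zero) (use Id_mult[OF g' cm] in simp)
    finally show "gmult (gcomm_prod (map y [1..<k+1])) (gcomm (y (k+1)) x) = gzero" .
  qed
next
  show "odd k \<longrightarrow> (\<forall>(y :: nat \<Rightarrow> 'a grass).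
       (\<forall>i \<in> {1..k+1}. y i \<in> Ek_comp k 0) \<longrightarrow>
       gmult (gcomm_prod (map y [1..<k])) (gcomm (y k) (y (k+1))) = gzero)"
  proof (intro impI allI)
    fix y :: "nat \<Rightarrow> 'a grass"
    assume ok: "odd k" and y: "\<forall>i \<in> {1..k+1}. y i \<in> Ek_comp k 0"
    let ?w = "\<lambda>i. A (y i)"
    have m: "map y [1..<k] = map R (map ?w [1..<k])"
      by (rule map_Ek) (use y in auto)
    have g: "gcp (map ?w [1..<k]) \<in> Id k (2 * (length [1..<k] div 2))"
      by (rule gcp_Ek) (use y in \<open>auto intro!: exI[of _ 0]\<close>)
    have g': "gcp (map ?w [1..<k]) \<in> Id k (k - 1)" using g ok by simp
    have o1: "odp (?w k) \<in> Id k 1" by (rule Ek_odp1) (use y assms in \<open>auto intro!: exI[of _ 0]\<close>)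
    have o2: "odp (?w (k+1)) \<in> Id k 1" by (rule Ek_odp1) (use y in \<open>auto intro!: exI[of _ 0]\<close>)
    have cm: "?w k * ?w (k+1) - ?w (k+1) * ?w k \<in> Id k (1 + 1)"
      by (rule Id_comm[OF o1 o2])
    have "y (k+1) \<in> Ek_comp k 0" "y k \<in> Ek_comp k 0" using y assms by simp_all
    then have xc: "y k \<in> grass_carrier" "y (k+1) \<in> grass_carrier" using Ek_car by blast+
    have "gmult (gcomm_prod (map y [1..<k])) (gcomm (y k) (y (k+1))) =
        R (gcp (map ?w [1..<k]) * (?w k * ?w (k+1) - ?w (k+1) * ?w k))"
      unfolding m gcomm_prod_R gcomm_RA[OF xc(1,2)] by simp
    also have "\<dots> = gzero"
      by (rule Id_R_zero) (use Id_mult[OF g' cm] assms in simp)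
    finally show "gmult (gcomm_prod (map y [1..<k])) (gcomm (y k) (y (k+1))) = gzero" .
  qed
next
  show "\<forall>l (z :: nat \<Rightarrow> 'a grass) (u :: nat \<Rightarrow> 'a grass). l \<le> k \<longrightarrow> even l \<longrightarrow>
       (\<forall>i \<in> {1..k-l+2}. \<exists>n. 0 < n \<and> odd n \<and> z i \<in> Ek_comp k n) \<longrightarrow>
       (\<forall>i \<in> {1..l}. \<exists>n. 0 \<le> n \<and> even n \<and> u i \<in> Ek_comp k n) \<longrightarrow>
       gmult (gpoly (k-l+2) z) (gcomm_prod (map u [1..<l+1])) = gzero"
  proof (intro allI impI)
    fix l and z u :: "nat \<Rightarrow> 'a grass"
    assume l: "l \<le> k" "even l"
      and z: "\<forall>i \<in> {1..k-l+2}. \<exists>n. 0 < n \<and> odd n \<and> z i \<in> Ek_comp k n"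
      and u: "\<forall>i \<in> {1..l}. \<exists>n. 0 \<le> n \<and> even n \<and> u i \<in> Ek_comp k n"
    let ?m = "k - l + 2"
    let ?wz = "\<lambda>i. A (z i)" and ?wu = "\<lambda>i. A (u i)"
    have zcar: "\<And>i. i \<in> {1..?m} \<Longrightarrow> z i \<in> grass_carrier"
    proof -
      fix i assume "i \<in> {1..?m}"
      then obtain n where "z i \<in> Ek_comp k n" using z by blast
      then show "z i \<in> grass_carrier" by (rule Ek_car)
    qed
    have gp: "gpoly ?m z = R (EVS ?wz ?m)"
      by (rule gpoly_R) (simp, rule zcar)
    have E: "EVS ?wz ?m \<in> Id k (?m - 1)"
      by (rule EVS_good) (use z Ek_odd_evp in blast)
    have m: "map u [1..<l+1] = map R (map ?wu [1..<l+1])"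
      by (rule map_Ek) (use u in auto)
    have g: "gcp (map ?wu [1..<l+1]) \<in> Id k (2 * (length [1..<l+1] div 2))"
      by (rule gcp_Ek) (use u in auto)
    have len: "2 * (length [1..<l+1] div 2) = l" using l by simp
    have "gmult (gpoly ?m z) (gcomm_prod (map u [1..<l+1])) = R (EVS ?wz ?m * gcp (map ?wu [1..<l+1]))"
      unfolding gp m gcomm_prod_R by simp
    also have "\<dots> = gzero"
      by (rule Id_R_zero, rule Id_mono[OF Id_mult[OF E g]]) (insert len l, arith)
    finally show "gmult (gpoly ?m z) (gcomm_prod (map u [1..<l+1])) = gzero" .
  qed
next
  show "\<forall>l (z :: nat \<Rightarrow> 'a grass) (u :: nat \<Rightarrow> 'a grass). l \<le> k \<longrightarrow> odd l \<longrightarrow>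
       (\<forall>i \<in> {1..k-l+2}. \<exists>n. 0 < n \<and> odd n \<and> z i \<in> Ek_comp k n) \<longrightarrow>
       (\<forall>i \<in> {1..l}. \<exists>n. 0 \<le> n \<and> even n \<and> u i \<in> Ek_comp k n) \<longrightarrow>
       gmult (gcomm (gpoly (k-l+2) z) (u 1)) (gcomm_prod (map u [2..<l+1])) = gzero"
  proof (intro allI impI)
    fix l and z u :: "nat \<Rightarrow> 'a grass"
    assume l: "l \<le> k" "odd l"
      and z: "\<forall>i \<in> {1..k-l+2}. \<exists>n. 0 < n \<and> odd n \<and> z i \<in> Ek_comp k n"
      and u: "\<forall>i \<in> {1..l}. \<exists>n. 0 \<le> n \<and> even n \<and> u i \<in> Ek_comp k n"
    let ?m = "k - l + 2"
    let ?wz = "\<lambda>i. A (z i)" and ?wu = "\<lambda>i. A (u i)"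
    let ?E = "EVS ?wz ?m"
    have l1: "1 \<le> l" using l by (cases l) auto
    have zcar: "\<And>i. i \<in> {1..?m} \<Longrightarrow> z i \<in> grass_carrier"
    proof -
      fix i assume "i \<in> {1..?m}"
      then obtain n where "z i \<in> Ek_comp k n" using z by blast
      then show "z i \<in> grass_carrier" by (rule Ek_car)
    qed
    have gp: "gpoly ?m z = R ?E"
      by (rule gpoly_R) (simp, rule zcar)
    have E: "?E \<in> Id k (?m - 1)"
      by (rule EVS_good) (use z Ek_odd_evp in blast)
    have u1: "\<exists>n. 0 \<le> n \<and> even n \<and> u 1 \<in> Ek_comp k n" using u l1 by auto
    have u1car: "u 1 \<in> grass_carrier"
    proof -
      obtain n where "u 1 \<in> Ek_comp k n" using u1 by blast
      then show ?thesis by (rule Ek_car)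
    qed
    have o1: "odp (?wu 1) \<in> Id k 1" by (rule Ek_odp1[OF u1])
    have cm: "?E * ?wu 1 - ?wu 1 * ?E \<in> Id k (?m - 1 + 1)"
      by (rule Id_comm[OF Id_odp[OF E] o1])
    have m: "map u [2..<l+1] = map R (map ?wu [2..<l+1])"
      by (rule map_Ek) (use u in auto)
    have g: "gcp (map ?wu [2..<l+1]) \<in> Id k (2 * (length [2..<l+1] div 2))"
      by (rule gcp_Ek) (use u in auto)
    have len: "2 * (length [2..<l+1] div 2) = l - 1"
    proof -
      have "length [2..<l+1] = l - 1" by (simp; arith)
      moreover have "even (l - 1)" using l l1 by simp
      ultimately show ?thesis by simp
    qed
    have "gmult (gcomm (gpoly ?m z) (u 1)) (gcomm_prod (map u [2..<l+1])) =
        R ((?E * ?wu 1 - ?wu 1 * ?E) * gcp (map ?wu [2..<l+1]))"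
      unfolding gp m gcomm_prod_R using gcomm_RA[OF R_car u1car, of ?E] by simp
    also have "\<dots> = gzero"
      by (rule Id_R_zero, rule Id_mono[OF Id_mult[OF cm g]]) (insert len l l1, arith)
    finally show "gmult (gcomm (gpoly ?m z) (u 1)) (gcomm_prod (map u [2..<l+1])) = gzero" .
  qed
next
  show "\<forall>l (z :: nat \<Rightarrow> 'a grass) (u :: nat \<Rightarrow> 'a grass). l \<le> k \<longrightarrow> odd l \<longrightarrow>
       (\<forall>i \<in> {1..k-l+3}. \<exists>n. 0 < n \<and> odd n \<and> z i \<in> Ek_comp k n) \<longrightarrow>
       (\<forall>i \<in> {1..l}. \<exists>n. 0 \<le> n \<and> even n \<and> u i \<in> Ek_comp k n) \<longrightarrow>
       gmult (gmult (gpoly (k-l+2) z) (gcomm (z (k-l+3)) (u 1)))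
             (gcomm_prod (map u [2..<l+1])) = gzero"
  proof (intro allI impI)
    fix l and z u :: "nat \<Rightarrow> 'a grass"
    assume l: "l \<le> k" "odd l"
      and z: "\<forall>i \<in> {1..k-l+3}. \<exists>n. 0 < n \<and> odd n \<and> z i \<in> Ek_comp k n"
      and u: "\<forall>i \<in> {1..l}. \<exists>n. 0 \<le> n \<and> even n \<and> u i \<in> Ek_comp k n"
    let ?m = "k - l + 2"
    let ?wz = "\<lambda>i. A (z i)" and ?wu = "\<lambda>i. A (u i)"
    let ?E = "EVS ?wz ?m"
    have l1: "1 \<le> l" using l by (cases l) auto
    have z': "\<forall>i \<in> {1..?m}. \<exists>n. 0 < n \<and> odd n \<and> z i \<in> Ek_comp k n" using z by auto
    have zcar: "\<And>i. i \<in> {1..?m} \<Longrightarrow> z i \<in> grass_carrier"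
    proof -
      fix i assume "i \<in> {1..?m}"
      then obtain n where "z i \<in> Ek_comp k n" using z' by blast
      then show "z i \<in> grass_carrier" by (rule Ek_car)
    qed
    have gp: "gpoly ?m z = R ?E"
      by (rule gpoly_R) (simp, rule zcar)
    have E: "?E \<in> Id k (?m - 1)"
      by (rule EVS_good) (use z' Ek_odd_evp in blast)
    have u1: "\<exists>n. 0 \<le> n \<and> even n \<and> u 1 \<in> Ek_comp k n" using u l1 by auto
    have u1car: "u 1 \<in> grass_carrier"
    proof -
      obtain n where "u 1 \<in> Ek_comp k n" using u1 by blast
      then show ?thesis by (rule Ek_car)
    qed
    have zcar3: "z (k-l+3) \<in> grass_carrier"
    proof -
      have "k-l+3 \<in> {1..k-l+3}" by simp
      then obtain n where "z (k-l+3) \<in> Ek_comp k n" using z by blast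
      then show ?thesis by (rule Ek_car)
    qed
    have o1: "odp (?wu 1) \<in> Id k 1" by (rule Ek_odp1[OF u1])
    have cm: "?wz (k-l+3) * ?wu 1 - ?wu 1 * ?wz (k-l+3) \<in> Id k (0 + 1)"
      by (rule Id_comm[OF _ o1]) simp
    have m: "map u [2..<l+1] = map R (map ?wu [2..<l+1])"
      by (rule map_Ek) (use u in auto)
    have g: "gcp (map ?wu [2..<l+1]) \<in> Id k (2 * (length [2..<l+1] div 2))"
      by (rule gcp_Ek) (use u in auto)
    have len: "2 * (length [2..<l+1] div 2) = l - 1"
    proof -
      have "length [2..<l+1] = l - 1" by (simp; arith)
      moreover have "even (l - 1)" using l l1 by simp
      ultimately show ?thesis by simp
    qed
    have "gmult (gmult (gpoly ?m z) (gcomm (z (k-l+3)) (u 1))) (gcomm_prod (map u [2..<l+1])) =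
        R (?E * (?wz (k-l+3) * ?wu 1 - ?wu 1 * ?wz (k-l+3)) * gcp (map ?wu [2..<l+1]))"
      unfolding gp m gcomm_prod_R using gcomm_RA[OF zcar3 u1car] by simp
    also have "\<dots> = gzero"
      by (rule Id_R_zero, rule Id_mono[OF Id_mult[OF Id_mult[OF E cm] g]]) (insert len l l1, arith)
    finally show "gmult (gmult (gpoly ?m z) (gcomm (z (k-l+3)) (u 1))) (gcomm_prod (map u [2..<l+1])) = gzero" .
  qed
qed

end
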